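(* Let $\mathbf{q}\in\mathbf{L}^2$ and $\bar{\mathbf{q}}\in\mathbf{H}^1$, and define $\bm{R}(\mathbf{q})=-\nabla^\perp(-\mathbf{\Delta}-M)^{-1}\mathbf{q}\cdot\nabla\mathbf{q}$. Then for each $\alpha\in(0,1)$ there is a constant $C$ depending only on $\alpha$ and $M$ such that $$\|\bm{R}(\mathbf{q})-\bm{R}(\bar{\mathbf{q}})\|_{\mathbf{H}^{-1-\alpha}}\le C\,\|\mathbf{q}-\bar{\mathbf{q}}\|_{\mathbf{H}^{-\alpha}}\big(\|\mathbf{q}\|+\|\bar{\mathbf{q}}\|_{\mathbf{H}^1}\big).$$
   Context: $\mathcal{D}=[0,L]^2$ periodic; $H^k(\mathcal{D})$, $k\in\mathbb{R}$, Sobolev spaces of $L$-periodic zero-mean functions, $\mathbf{H}^k=H^k\times H^k$ with norm $\|\mathbf{u}\|_{\mathbf{H}^k}^2=\|u_1\|^2_{H^k}+\|u_2\|^2_{H^k}$, $\mathbf{L}^2=\mathbf{H}^0$ with norm $\|\cdot\|$. $\mathbf{\Delta}(u_1,u_2)^t=(\Delta u_1,\Delta u_2)^t$; $M=\begin{pmatrix}-S_1&S_1\\S_2&-S_2\end{pmatrix}$ with $S_1,S_2>0$, and $(-\mathbf{\Delta}-M)^{-1}:\mathbf{H}^k\to\mathbf{H}^{k+2}$ is bounded. For vector fields, $\nabla^\perp\bm{\psi}\cdot\nabla\mathbf{q}:=(\nabla^\perp\psi_1\cdot\nabla q_1,\nabla^\perp\psi_2\cdot\nabla q_2)^t$, $\nabla^\perp=(-\partial_y,\partial_x)$.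 *)

theory Defs
  imports "HOL-Analysis.Analysis"
begin

text \<open>
  L-periodic zero-mean (real-valued) functions / distributions on [0,L]^2 are represented
  by their Fourier coefficients c :: int \<times> int \<Rightarrow> complex, with the convention
  u(x) = \<Sum>_\<xi> c(\<xi>) exp(i k(\<xi>)\<cdot>x), k(\<xi>) = (2\<pi>/L) \<xi>.
  Zero mean: c(0,0) = 0.  Real-valuedness: c(-\<xi>) = cnj (c \<xi>).
\<close>

type_synonym sfield = "int \<times> int \<Rightarrow> complex"
type_synonym vfield = "sfield \<times> sfield"

definition kx :: "real \<Rightarrow> int \<times> int \<Rightarrow> real" where
  "kx L \<xi> = 2 * pi / L * of_int (fst \<xi>)"

definition ky :: "real \<Rightarrow> int \<times> int \<Rightarrow> real" where
  "ky L \<xi> = 2 * pi / L * of_int (snd \<xi>)"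

text \<open>|k(\<xi>)|^2, the Fourier symbol of -\<Delta>.\<close>
definition ksq :: "real \<Rightarrow> int \<times> int \<Rightarrow> real" where
  "ksq L \<xi> = (kx L \<xi>)^2 + (ky L \<xi>)^2"

definition Hnorm2 :: "real \<Rightarrow> real \<Rightarrow> sfield \<Rightarrow> real" where
  "Hnorm2 L s c = (\<Sum>\<^sub>\<infinity>\<xi>\<in>UNIV - {(0,0)}. ksq L \<xi> powr s * (cmod (c \<xi>))^2)"

definition inH :: "real \<Rightarrow> real \<Rightarrow> sfield \<Rightarrow> bool" where
  "inH L s c \<longleftrightarrow> c (0,0) = 0 \<and> (\<forall>a b. c (-a, -b) = cnj (c (a, b))) \<and>
     (\<lambda>\<xi>. ksq L \<xi> powr s * (cmod (c \<xi>))^2) summable_on (UNIV - {(0,0)})"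

definition inHv :: "real \<Rightarrow> real \<Rightarrow> vfield \<Rightarrow> bool" where
  "inHv L s q \<longleftrightarrow> inH L s (fst q) \<and> inH L s (snd q)"

definition Hvnorm :: "real \<Rightarrow> real \<Rightarrow> vfield \<Rightarrow> real" where
  "Hvnorm L s q = sqrt (Hnorm2 L s (fst q) + Hnorm2 L s (snd q))"

definition vdiff :: "vfield \<Rightarrow> vfield \<Rightarrow> vfield" where
  "vdiff q p = ((\<lambda>\<xi>. fst q \<xi> - fst p \<xi>), (\<lambda>\<xi>. snd q \<xi> - snd p \<xi>))"

text \<open>(-\<Delta> - M)^{-1} with M = [[-S1, S1],[S2, -S2]]: at each nonzero wavenumber, the
  solution of (|k|^2 + S1) \<psi>1 - S1 \<psi>2 = q1,  -S2 \<psi>1 + (|k|^2 + S2) \<psi>2 = q2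
  (explicit inverse of the 2x2 symbol); the zero mode is 0.\<close>
definition symdet :: "real \<Rightarrow> real \<Rightarrow> real \<Rightarrow> int \<times> int \<Rightarrow> real" where
  "symdet L S1 S2 \<xi> = (ksq L \<xi> + S1) * (ksq L \<xi> + S2) - S1 * S2"

definition invop :: "real \<Rightarrow> real \<Rightarrow> real \<Rightarrow> vfield \<Rightarrow> vfield" where
  "invop L S1 S2 q =
    ((\<lambda>\<xi>. if \<xi> = (0,0) then 0 else
        (of_real (ksq L \<xi> + S2) * fst q \<xi> + of_real S1 * snd q \<xi>) / of_real (symdet L S1 S2 \<xi>)),
     (\<lambda>\<xi>. if \<xi> = (0,0) then 0 else
        (of_real S2 * fst q \<xi> + of_real (ksq L \<xi> + S1) * snd q \<xi>) / of_real (symdet L S1 S2 \<xi>)))"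

text \<open>Fourier coefficients of \<nabla>^\<perp>\<psi>\<cdot>\<nabla>q (scalar), \<nabla>^\<perp> = (-\<partial>_y, \<partial>_x):
  the convolution of the coefficients of (-\<partial>_y \<psi>, \<partial>_x \<psi>) and (\<partial>_x q, \<partial>_y q).\<close>
definition jac :: "real \<Rightarrow> sfield \<Rightarrow> sfield \<Rightarrow> sfield" where
  "jac L \<psi> q \<xi> = (\<Sum>\<^sub>\<infinity>\<eta>\<in>UNIV.
     let \<zeta> = (fst \<xi> - fst \<eta>, snd \<xi> - snd \<eta>) in
       ((- \<i> * of_real (ky L \<zeta>)) * \<psi> \<zeta>) * ((\<i> * of_real (kx L \<eta>)) * q \<eta>)
     + ((\<i> * of_real (kx L \<zeta>)) * \<psi> \<zeta>) * ((\<i> * of_real (ky L \<eta>)) * q \<eta>))"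

definition Rop :: "real \<Rightarrow> real \<Rightarrow> real \<Rightarrow> vfield \<Rightarrow> vfield" where
  "Rop L S1 S2 q = (let \<psi> = invop L S1 S2 q in
     ((\<lambda>\<xi>. - jac L (fst \<psi>) (fst q) \<xi>), (\<lambda>\<xi>. - jac L (snd \<psi>) (snd q) \<xi>)))"

end

theory Submission
  imports Defs
begin

lemma amgm_opt:
  fixes s P Q :: real
  assumes "s \<ge> 0" "P \<ge> 0" "Q \<ge> 0" and h: "\<And>t. t > 0 \<Longrightarrow> s \<le> (t * P + Q / t) / 2"
  shows "s^2 \<le> P * Q"
proof (cases "P > 0 \<and> Q > 0")
  case True
  define t where "t = sqrt (Q / P)"
  have tp: "t > 0" using True by (simp add: t_def)
  have "t * P = sqrt (P*Q)" using True
    by (simp add: t_def real_sqrt_divide real_sqrt_mult field_simps)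
  moreover have "Q / t = sqrt (P*Q)" using True
    by (simp add: t_def real_sqrt_divide real_sqrt_mult field_simps)
  ultimately have "s \<le> sqrt (P*Q)" using h[OF tp] by simp
  then have "s^2 \<le> (sqrt (P*Q))^2" using assms(1) by (simp add: power_mono)
  then show ?thesis using assms by simp
next
  case False
  have "s \<le> 0"
  proof (rule ccontr)
    assume "\<not> s \<le> 0"
    then have sp: "s > 0" by simp
    show False
    proof (cases "P = 0")
      case True
      define t where "t = Q / s + 1"
      have tp: "t > 0" using sp assms by (simp add: t_def add_nonneg_pos)
      have "s \<le> Q / t / 2" using h[OF tp] True by simp
      moreover have "Q / t < s"
      proof -
        have "Q < s * t" using sp by (simp add: t_def field_simps)
        then show ?thesis using tp by (simp add: field_simps)
      qed
      ultimately show False using sp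
        by (metis add_le_same_cancel2 field_sum_of_halves leD le_less_trans linorder_not_le not_less_iff_gr_or_eq)
    next
      case F: False
      then have Q0: "Q = 0" using False assms by auto
      define t where "t = s / (P + 1)"
      have tp: "t > 0" using sp assms by (simp add: t_def)
      have "s \<le> t * P / 2" using h[OF tp] Q0 by simp
      moreover have "t * P < s" using sp assms by (simp add: t_def field_simps)
      ultimately show False using sp by linarith
    qed
  qed
  then have "s = 0" using assms by simp
  then show ?thesis using assms by simp
qed

lemma cs_infsum:
  fixes f g :: "'a \<Rightarrow> real"
  assumes f0: "\<And>x. f x \<ge> 0" and g0: "\<And>x. g x \<ge> 0"
    and fs: "(\<lambda>x. (f x)^2) summable_on A" and gs: "(\<lambda>x. (g x)^2) summable_on A"
  shows "(\<lambda>x. f x * g x) summable_on A"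
    and "(infsum (\<lambda>x. f x * g x) A)^2 \<le> infsum (\<lambda>x. (f x)^2) A * infsum (\<lambda>x. (g x)^2) A"
proof -
  have le: "f x * g x \<le> ((f x)^2 + (g x)^2)/2" for x
  proof -
    have "0 \<le> (f x - g x)^2" by simp
    then show ?thesis by (simp add: power2_eq_square algebra_simps)
  qed
  have "(\<lambda>x. ((f x)^2 + (g x)^2) * (1/2)) summable_on A"
    by (rule summable_on_cmult_left[OF summable_on_add[OF fs gs]])
  then have "(\<lambda>x. ((f x)^2 + (g x)^2)/2) summable_on A" by simp
  then show sfg: "(\<lambda>x. f x * g x) summable_on A"
    by (rule summable_on_comparison_test) (use le f0 g0 in auto)
  show "(infsum (\<lambda>x. f x * g x) A)^2 \<le> infsum (\<lambda>x. (f x)^2) A * infsum (\<lambda>x. (g x)^2) A"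
  proof (rule amgm_opt)
    show "0 \<le> infsum (\<lambda>x. f x * g x) A" by (rule infsum_nonneg) (use f0 g0 in auto)
    show "0 \<le> infsum (\<lambda>x. (f x)^2) A" by (rule infsum_nonneg) auto
    show "0 \<le> infsum (\<lambda>x. (g x)^2) A" by (rule infsum_nonneg) auto
    fix t :: real assume tp: "t > 0"
    have le2: "f x * g x \<le> (t * (f x)^2 + (g x)^2 / t) / 2" for x
    proof -
      have "0 \<le> (t * f x - g x)^2" by simp
      then have "2 * t * (f x * g x) \<le> t^2 * (f x)^2 + (g x)^2"
        by (simp add: power2_eq_square algebra_simps)
      then show ?thesis using tp by (simp add: field_simps power2_eq_square)
    qed
    have s1: "(\<lambda>x. t * (f x)^2 / 2) summable_on A"
      using summable_on_cmult_right[OF fs, of "t/2"] by (simp add: field_simps)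
    have s2: "(\<lambda>x. (g x)^2 / t / 2) summable_on A"
      using summable_on_cmult_left[OF gs, of "1/t/2"] by (simp add: field_simps)
    have "infsum (\<lambda>x. f x * g x) A \<le> infsum (\<lambda>x. t * (f x)^2 / 2 + (g x)^2 / t / 2) A"
      by (rule infsum_mono[OF sfg summable_on_add[OF s1 s2]]) (use le2 in \<open>auto simp: field_simps\<close>)
    also have "\<dots> = infsum (\<lambda>x. t * (f x)^2 / 2) A + infsum (\<lambda>x. (g x)^2 / t / 2) A"
      by (rule infsum_add[OF s1 s2])
    also have "\<dots> = (t * infsum (\<lambda>x. (f x)^2) A + infsum (\<lambda>x. (g x)^2) A / t) / 2"
    proof -
      have "infsum (\<lambda>x. t * (f x)^2 / 2) A = infsum (\<lambda>x. (f x)^2 * (t/2)) A"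
        by (rule infsum_cong) simp
      also have "\<dots> = infsum (\<lambda>x. (f x)^2) A * (t/2)" by (rule infsum_cmult_left')
      finally have 1: "infsum (\<lambda>x. t * (f x)^2 / 2) A = infsum (\<lambda>x. (f x)^2) A * (t/2)" .
      have "infsum (\<lambda>x. (g x)^2 / t / 2) A = infsum (\<lambda>x. (g x)^2 * (1/t/2)) A"
        by (rule infsum_cong) simp
      also have "\<dots> = infsum (\<lambda>x. (g x)^2) A * (1/t/2)" by (rule infsum_cmult_left')
      finally have 2: "infsum (\<lambda>x. (g x)^2 / t / 2) A = infsum (\<lambda>x. (g x)^2) A * (1/t/2)" .
      show ?thesis unfolding 1 2 by (simp add: field_simps)
    qed
    finally show "infsum (\<lambda>x. f x * g x) A \<le> (t * infsum (\<lambda>x. (f x)^2) A + infsum (\<lambda>x. (g x)^2) A / t) / 2" .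
  qed
qed

lemma infsum_finite_sum_swap:
  fixes h :: "'b \<Rightarrow> 'a \<Rightarrow> real"
  assumes "finite F" "\<And>i. i \<in> F \<Longrightarrow> h i summable_on A"
  shows "(\<lambda>x. \<Sum>i\<in>F. h i x) summable_on A \<and> (\<Sum>i\<in>F. infsum (h i) A) = infsum (\<lambda>x. \<Sum>i\<in>F. h i x) A"
  using assms
proof (induction F rule: finite_induct)
  case empty then show ?case by simp
next
  case (insert i F)
  then have a: "(\<lambda>x. \<Sum>i\<in>F. h i x) summable_on A" and b: "(\<Sum>i\<in>F. infsum (h i) A) = infsum (\<lambda>x. \<Sum>i\<in>F. h i x) A"
    by auto
  have c: "h i summable_on A" using insert by auto
  have e1: "(\<lambda>x. \<Sum>i\<in>insert i F. h i x) = (\<lambda>x. h i x + (\<Sum>i\<in>F. h i x))"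
    using insert(1,2) by (simp add: sum.insert)
  have e2: "(\<Sum>i\<in>insert i F. infsum (h i) A) = infsum (h i) A + (\<Sum>i\<in>F. infsum (h i) A)"
    using insert(1,2) by (simp add: sum.insert)
  show ?case unfolding e1 e2 b using summable_on_add[OF c a] infsum_add[OF c a] by simp
qed

definition sub :: "int \<times> int \<Rightarrow> int \<times> int \<Rightarrow> int \<times> int" where
  "sub \<xi> \<eta> = (fst \<xi> - fst \<eta>, snd \<xi> - snd \<eta>)"

lemma bij_sub: "bij_betw (\<lambda>\<eta>. sub \<xi> \<eta>) UNIV UNIV"
  by (rule bij_betwI[where g="\<lambda>\<eta>. sub \<xi> \<eta>"]) (auto simp: sub_def)

lemma inj_sub2: "inj (\<lambda>\<xi>. sub \<xi> \<eta>)"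
  by (auto simp: inj_def sub_def prod_eq_iff)

lemma reindex_sub:
  fixes u :: "int \<times> int \<Rightarrow> real"
  assumes "(\<lambda>\<zeta>. (u \<zeta>)^2) summable_on UNIV"
  shows "(\<lambda>\<eta>. (u (sub \<xi> \<eta>))^2) summable_on UNIV"
    and "infsum (\<lambda>\<eta>. (u (sub \<xi> \<eta>))^2) UNIV = infsum (\<lambda>\<zeta>. (u \<zeta>)^2) UNIV"
  using summable_on_reindex_bij_betw[OF bij_sub, of "\<lambda>\<zeta>. (u \<zeta>)^2" \<xi>] assms
    infsum_reindex_bij_betw[OF bij_sub, of "\<lambda>\<zeta>. (u \<zeta>)^2" \<xi>] by auto

lemma single_le_infsum:
  fixes u :: "'a \<Rightarrow> real"
  assumes "u summable_on UNIV" "\<And>x. u x \<ge> 0"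
  shows "u z \<le> infsum u UNIV"
  using finite_sum_le_infsum[OF assms(1), of "{z}"] assms(2) by auto

lemma schur:
  fixes u v :: "int \<times> int \<Rightarrow> real" and K1 K2 :: "int \<times> int \<Rightarrow> int \<times> int \<Rightarrow> real"
  assumes u0: "\<And>\<zeta>. u \<zeta> \<ge> 0" and v0: "\<And>\<zeta>. v \<zeta> \<ge> 0"
    and K10: "\<And>\<xi> \<eta>. K1 \<xi> \<eta> \<ge> 0" and K20: "\<And>\<xi> \<eta>. K2 \<xi> \<eta> \<ge> 0"
    and us: "(\<lambda>\<zeta>. (u \<zeta>)^2) summable_on UNIV" and vs: "(\<lambda>\<zeta>. (v \<zeta>)^2) summable_on UNIV"
    and k1: "\<And>\<eta> F. finite F \<Longrightarrow> (\<Sum>\<xi>\<in>F. (K1 \<xi> \<eta>)^2) \<le> M1"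
    and k2: "\<And>\<xi> G. finite G \<Longrightarrow> (\<Sum>\<eta>\<in>G. (K2 \<xi> \<eta>)^2) \<le> M2"
  shows "\<And>\<xi>. (\<lambda>\<eta>. (K1 \<xi> \<eta> + K2 \<xi> \<eta>) * u (sub \<xi> \<eta>) * v \<eta>) summable_on UNIV"
    and "(\<lambda>\<xi>. (infsum (\<lambda>\<eta>. (K1 \<xi> \<eta> + K2 \<xi> \<eta>) * u (sub \<xi> \<eta>) * v \<eta>) UNIV)^2) summable_on UNIV"
    and "infsum (\<lambda>\<xi>. (infsum (\<lambda>\<eta>. (K1 \<xi> \<eta> + K2 \<xi> \<eta>) * u (sub \<xi> \<eta>) * v \<eta>) UNIV)^2) UNIV
          \<le> 2 * (M1 + M2) * infsum (\<lambda>\<zeta>. (u \<zeta>)^2) UNIV * infsum (\<lambda>\<zeta>. (v \<zeta>)^2) UNIV"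
proof -
  define U where "U = infsum (\<lambda>\<zeta>. (u \<zeta>)^2) UNIV"
  define V where "V = infsum (\<lambda>\<zeta>. (v \<zeta>)^2) UNIV"
  have U0: "U \<ge> 0" unfolding U_def by (rule infsum_nonneg) auto
  have V0: "V \<ge> 0" unfolding V_def by (rule infsum_nonneg) auto
  have M10: "M1 \<ge> 0" using k1[of "{}"] by simp
  have M20: "M2 \<ge> 0" using k2[of "{}"] by simp
  have K1b: "(K1 \<xi> \<eta>)^2 \<le> M1" for \<xi> \<eta> using k1[of "{\<xi>}" \<eta>] by simp
  have ub: "(u \<zeta>)^2 \<le> U" for \<zeta> unfolding U_def by (rule single_le_infsum[OF us]) auto
  have S1: "(\<lambda>\<eta>. (K1 \<xi> \<eta> * v \<eta>)^2) summable_on UNIV" for \<xi>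
  proof (rule summable_on_comparison_test[OF summable_on_cmult_right[OF vs, of M1]])
    fix \<eta> show "(K1 \<xi> \<eta> * v \<eta>)^2 \<le> M1 * (v \<eta>)^2"
      using K1b[of \<xi> \<eta>] by (simp add: power_mult_distrib mult_right_mono)
  qed simp
  have S2: "(\<lambda>\<eta>. (K2 \<xi> \<eta>)^2) summable_on UNIV" for \<xi>
    by (rule nonneg_bdd_above_summable_on) (auto intro!: bdd_aboveI[where M=M2] k2)
  have S2b: "infsum (\<lambda>\<eta>. (K2 \<xi> \<eta>)^2) UNIV \<le> M2" for \<xi>
    by (rule infsum_le_finite_sums[OF S2]) (use k2 in auto)
  have S3: "(\<lambda>\<eta>. (u (sub \<xi> \<eta>) * v \<eta>)^2) summable_on UNIV" for \<xi>
  proof (rule summable_on_comparison_test[OF summable_on_cmult_right[OF vs, of U]])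
    fix \<eta> show "(u (sub \<xi> \<eta>) * v \<eta>)^2 \<le> U * (v \<eta>)^2"
      using ub[of "sub \<xi> \<eta>"] by (simp add: power_mult_distrib mult_right_mono)
  qed simp
  define Ta where "Ta \<xi> = infsum (\<lambda>\<eta>. u (sub \<xi> \<eta>) * (K1 \<xi> \<eta> * v \<eta>)) UNIV" for \<xi>
  define Tb where "Tb \<xi> = infsum (\<lambda>\<eta>. K2 \<xi> \<eta> * (u (sub \<xi> \<eta>) * v \<eta>)) UNIV" for \<xi>
  have sa: "(\<lambda>\<eta>. u (sub \<xi> \<eta>) * (K1 \<xi> \<eta> * v \<eta>)) summable_on UNIV"
   and Ta2: "(Ta \<xi>)^2 \<le> U * infsum (\<lambda>\<eta>. (K1 \<xi> \<eta> * v \<eta>)^2) UNIV" for \<xi>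
    using cs_infsum[of "\<lambda>\<eta>. u (sub \<xi> \<eta>)" "\<lambda>\<eta>. K1 \<xi> \<eta> * v \<eta>" UNIV] u0 v0 K10
      reindex_sub[OF us, of \<xi>] S1[of \<xi>] unfolding Ta_def U_def by auto
  have sb: "(\<lambda>\<eta>. K2 \<xi> \<eta> * (u (sub \<xi> \<eta>) * v \<eta>)) summable_on UNIV"
   and Tb2': "(Tb \<xi>)^2 \<le> infsum (\<lambda>\<eta>. (K2 \<xi> \<eta>)^2) UNIV * infsum (\<lambda>\<eta>. (u (sub \<xi> \<eta>) * v \<eta>)^2) UNIV" for \<xi>
    using cs_infsum[of "\<lambda>\<eta>. K2 \<xi> \<eta>" "\<lambda>\<eta>. u (sub \<xi> \<eta>) * v \<eta>" UNIV] u0 v0 K20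
      S2[of \<xi>] S3[of \<xi>] unfolding Tb_def by auto
  have Tb2: "(Tb \<xi>)^2 \<le> M2 * infsum (\<lambda>\<eta>. (u (sub \<xi> \<eta>) * v \<eta>)^2) UNIV" for \<xi>
  proof -
    have "infsum (\<lambda>\<eta>. (u (sub \<xi> \<eta>) * v \<eta>)^2) UNIV \<ge> 0" by (rule infsum_nonneg) auto
    then show ?thesis using Tb2'[of \<xi>] S2b[of \<xi>] by (meson mult_right_mono order_trans)
  qed
  have eqT: "(\<lambda>\<eta>. (K1 \<xi> \<eta> + K2 \<xi> \<eta>) * u (sub \<xi> \<eta>) * v \<eta>)
      = (\<lambda>\<eta>. u (sub \<xi> \<eta>) * (K1 \<xi> \<eta> * v \<eta>) + K2 \<xi> \<eta> * (u (sub \<xi> \<eta>) * v \<eta>))" for \<xi>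
    by (auto simp: algebra_simps)
  show sT: "\<And>\<xi>. (\<lambda>\<eta>. (K1 \<xi> \<eta> + K2 \<xi> \<eta>) * u (sub \<xi> \<eta>) * v \<eta>) summable_on UNIV"
    unfolding eqT using summable_on_add[OF sa sb] by blast
  have Teq: "infsum (\<lambda>\<eta>. (K1 \<xi> \<eta> + K2 \<xi> \<eta>) * u (sub \<xi> \<eta>) * v \<eta>) UNIV = Ta \<xi> + Tb \<xi>" for \<xi>
    unfolding eqT Ta_def Tb_def by (rule infsum_add[OF sa sb])
  have Ta0: "Ta \<xi> \<ge> 0" for \<xi> unfolding Ta_def by (rule infsum_nonneg) (simp add: u0 v0 K10)
  have Tb0: "Tb \<xi> \<ge> 0" for \<xi> unfolding Tb_def by (rule infsum_nonneg) (simp add: u0 v0 K20)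
  have fin: "(\<Sum>\<xi>\<in>F. (Ta \<xi> + Tb \<xi>)^2) \<le> 2 * (M1 + M2) * U * V" if F: "finite F" for F
  proof -
    have "(\<Sum>\<xi>\<in>F. (Ta \<xi> + Tb \<xi>)^2) \<le> (\<Sum>\<xi>\<in>F. 2 * (Ta \<xi>)^2 + 2 * (Tb \<xi>)^2)"
    proof (rule sum_mono)
      fix \<xi> have "0 \<le> (Ta \<xi> - Tb \<xi>)^2" by simp
      then show "(Ta \<xi> + Tb \<xi>)^2 \<le> 2 * (Ta \<xi>)^2 + 2 * (Tb \<xi>)^2"
        by (simp add: power2_eq_square algebra_simps)
    qed
    also have "\<dots> = 2 * (\<Sum>\<xi>\<in>F. (Ta \<xi>)^2) + 2 * (\<Sum>\<xi>\<in>F. (Tb \<xi>)^2)"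
      by (simp add: sum.distrib sum_distrib_left)
    also have "\<dots> \<le> 2 * (U * M1 * V) + 2 * (M2 * U * V)"
    proof -
      have sw1e: "(\<Sum>\<xi>\<in>F. infsum (\<lambda>\<eta>. (K1 \<xi> \<eta> * v \<eta>)^2) UNIV)
           = infsum (\<lambda>\<eta>. \<Sum>\<xi>\<in>F. (K1 \<xi> \<eta> * v \<eta>)^2) UNIV"
        and sw1: "(\<lambda>\<eta>. \<Sum>\<xi>\<in>F. (K1 \<xi> \<eta> * v \<eta>)^2) summable_on UNIV"
        using infsum_finite_sum_swap[OF F, of "\<lambda>\<xi> \<eta>. (K1 \<xi> \<eta> * v \<eta>)^2" UNIV] S1 by auto
      have "(\<Sum>\<xi>\<in>F. (Ta \<xi>)^2) \<le> (\<Sum>\<xi>\<in>F. U * infsum (\<lambda>\<eta>. (K1 \<xi> \<eta> * v \<eta>)^2) UNIV)"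
        by (rule sum_mono) (rule Ta2)
      also have "\<dots> = U * infsum (\<lambda>\<eta>. \<Sum>\<xi>\<in>F. (K1 \<xi> \<eta> * v \<eta>)^2) UNIV"
        by (simp add: sum_distrib_left[symmetric] sw1e)
      also have "\<dots> \<le> U * infsum (\<lambda>\<eta>. M1 * (v \<eta>)^2) UNIV"
      proof (rule mult_left_mono[OF infsum_mono[OF sw1 summable_on_cmult_right[OF vs]] U0])
        fix \<eta>
        have "(\<Sum>\<xi>\<in>F. (K1 \<xi> \<eta> * v \<eta>)^2) = (\<Sum>\<xi>\<in>F. (K1 \<xi> \<eta>)^2) * (v \<eta>)^2"
          by (simp add: power_mult_distrib sum_distrib_right)
        also have "\<dots> \<le> M1 * (v \<eta>)^2" by (rule mult_right_mono[OF k1[OF F]]) simp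
        finally show "(\<Sum>\<xi>\<in>F. (K1 \<xi> \<eta> * v \<eta>)^2) \<le> M1 * (v \<eta>)^2" .
      qed
      also have "infsum (\<lambda>\<eta>. M1 * (v \<eta>)^2) UNIV = M1 * V"
        unfolding V_def by (rule infsum_cmult_right')
      finally have A1: "(\<Sum>\<xi>\<in>F. (Ta \<xi>)^2) \<le> U * (M1 * V)" .
      have sw2e: "(\<Sum>\<xi>\<in>F. infsum (\<lambda>\<eta>. (u (sub \<xi> \<eta>) * v \<eta>)^2) UNIV)
           = infsum (\<lambda>\<eta>. \<Sum>\<xi>\<in>F. (u (sub \<xi> \<eta>) * v \<eta>)^2) UNIV"
        and sw2: "(\<lambda>\<eta>. \<Sum>\<xi>\<in>F. (u (sub \<xi> \<eta>) * v \<eta>)^2) summable_on UNIV"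
        using infsum_finite_sum_swap[OF F, of "\<lambda>\<xi> \<eta>. (u (sub \<xi> \<eta>) * v \<eta>)^2" UNIV] S3 by auto
      have "(\<Sum>\<xi>\<in>F. (Tb \<xi>)^2) \<le> (\<Sum>\<xi>\<in>F. M2 * infsum (\<lambda>\<eta>. (u (sub \<xi> \<eta>) * v \<eta>)^2) UNIV)"
        by (rule sum_mono) (rule Tb2)
      also have "\<dots> = M2 * infsum (\<lambda>\<eta>. \<Sum>\<xi>\<in>F. (u (sub \<xi> \<eta>) * v \<eta>)^2) UNIV"
        by (simp add: sum_distrib_left[symmetric] sw2e)
      also have "\<dots> \<le> M2 * infsum (\<lambda>\<eta>. U * (v \<eta>)^2) UNIV"
      proof (rule mult_left_mono[OF infsum_mono[OF sw2 summable_on_cmult_right[OF vs]] M20])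
        fix \<eta>
        have "(\<Sum>\<xi>\<in>F. (u (sub \<xi> \<eta>))^2) = (\<Sum>\<zeta>\<in>(\<lambda>\<xi>. sub \<xi> \<eta>) ` F. (u \<zeta>)^2)"
          by (rule sum.reindex[symmetric, unfolded comp_def]) (auto simp: inj_on_def sub_def prod_eq_iff)
        also have "\<dots> \<le> U" unfolding U_def
          by (rule finite_sum_le_infsum[OF us]) (use F in auto)
        finally have "(\<Sum>\<xi>\<in>F. (u (sub \<xi> \<eta>))^2) \<le> U" .
        then have "(\<Sum>\<xi>\<in>F. (u (sub \<xi> \<eta>))^2) * (v \<eta>)^2 \<le> U * (v \<eta>)^2"
          by (rule mult_right_mono) simp
        then show "(\<Sum>\<xi>\<in>F. (u (sub \<xi> \<eta>) * v \<eta>)^2) \<le> U * (v \<eta>)^2"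
          by (simp add: power_mult_distrib sum_distrib_right)
      qed
      also have "infsum (\<lambda>\<eta>. U * (v \<eta>)^2) UNIV = U * V"
        unfolding V_def by (rule infsum_cmult_right')
      finally have A2: "(\<Sum>\<xi>\<in>F. (Tb \<xi>)^2) \<le> M2 * (U * V)" .
      show ?thesis using A1 A2 by (simp add: algebra_simps)
    qed
    also have "\<dots> = 2 * (M1 + M2) * U * V" by (simp add: algebra_simps)
    finally show ?thesis .
  qed
  show s2: "(\<lambda>\<xi>. (infsum (\<lambda>\<eta>. (K1 \<xi> \<eta> + K2 \<xi> \<eta>) * u (sub \<xi> \<eta>) * v \<eta>) UNIV)^2) summable_on UNIV"
    unfolding Teq by (rule nonneg_bdd_above_summable_on) (use fin in \<open>auto intro!: bdd_aboveI[where M="2 * (M1 + M2) * U * V"]\<close>)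
  show "infsum (\<lambda>\<xi>. (infsum (\<lambda>\<eta>. (K1 \<xi> \<eta> + K2 \<xi> \<eta>) * u (sub \<xi> \<eta>) * v \<eta>) UNIV)^2) UNIV
          \<le> 2 * (M1 + M2) * infsum (\<lambda>\<zeta>. (u \<zeta>)^2) UNIV * infsum (\<lambda>\<zeta>. (v \<zeta>)^2) UNIV"
    using s2 unfolding Teq U_def[symmetric] V_def[symmetric]
    by (rule infsum_le_finite_sums) (use fin in auto)
qed

lemma concave_step:
  fixes x \<gamma> :: real
  assumes x: "x > 0" and g0: "0 < \<gamma>" and g1: "\<gamma> \<le> 1"
  shows "\<gamma> * (x + 1) powr (\<gamma> - 1) \<le> (x + 1) powr \<gamma> - x powr \<gamma>"
proof -
  have "\<exists>z. x < z \<and> z < x + 1 \<and> (x + 1) powr \<gamma> - x powr \<gamma> = ((x + 1) - x) * (\<gamma> * z powr (\<gamma> - 1))"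
    by (rule MVT2) (use x in \<open>auto intro!: DERIV_powr derivative_eq_intros\<close>)
  then obtain z where z: "x < z" "z < x + 1" "(x + 1) powr \<gamma> - x powr \<gamma> = \<gamma> * z powr (\<gamma> - 1)"
    by auto
  have "(x + 1) powr (\<gamma> - 1) \<le> z powr (\<gamma> - 1)"
    by (rule powr_mono2') (use z x g1 in auto)
  then show ?thesis using z g0 by (simp add: mult_left_mono)
qed

lemma int_sym_interval_Suc:
  "{- int (Suc N)..int (Suc N)} = insert (int (Suc N)) (insert (- int (Suc N)) {- int N..int N})"
  by auto

lemma sum1d_beta:
  fixes \<beta> :: real
  assumes "0 \<le> \<beta>" "\<beta> < 1"
  shows "(\<Sum>a\<in>{- int N..int N}. (real_of_int \<bar>a\<bar> + 1) powr (- \<beta>)) \<le> 2 * (real N + 1) powr (1 - \<beta>) / (1 - \<beta>)"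
proof (induction N)
  case 0
  have "1 \<le> 2 / (1 - \<beta>)" using assms by (simp add: field_simps)
  then show ?case by simp
next
  case (Suc N)
  have st: "(1 - \<beta>) * (real N + 2) powr (- \<beta>) \<le> (real N + 2) powr (1 - \<beta>) - (real N + 1) powr (1 - \<beta>)"
    using concave_step[of "real N + 1" "1 - \<beta>"] assms by (simp add: add.assoc)
  have "(\<Sum>a\<in>{- int (Suc N)..int (Suc N)}. (real_of_int \<bar>a\<bar> + 1) powr (- \<beta>))
      = 2 * (real N + 2) powr (- \<beta>) + (\<Sum>a\<in>{- int N..int N}. (real_of_int \<bar>a\<bar> + 1) powr (- \<beta>))"
    unfolding int_sym_interval_Suc by (simp add: algebra_simps)
  also have "\<dots> \<le> 2 * (real N + 2) powr (- \<beta>) + 2 * (real N + 1) powr (1 - \<beta>) / (1 - \<beta>)"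
    using Suc by simp
  also have "\<dots> \<le> 2 * (real (Suc N) + 1) powr (1 - \<beta>) / (1 - \<beta>)"
  proof -
    have x1: "(real N + 2) powr (- \<beta>) \<le> ((real N + 2) powr (1 - \<beta>) - (real N + 1) powr (1 - \<beta>)) / (1 - \<beta>)"
      using st assms by (simp add: pos_le_divide_eq mult.commute)
    have x2: "((real N + 2) powr (1 - \<beta>) - (real N + 1) powr (1 - \<beta>)) / (1 - \<beta>)
        = (real N + 2) powr (1 - \<beta>) / (1 - \<beta>) - (real N + 1) powr (1 - \<beta>) / (1 - \<beta>)"
      by (rule diff_divide_distrib)
    have x3: "real (Suc N) + 1 = real N + 2" by simp
    show ?thesis unfolding x3 using x1 x2 by simp
  qed
  finally show ?case .
qed

lemma sum1d_two:
  "(\<Sum>a\<in>{- int N..int N}. (real_of_int \<bar>a\<bar> + 1) powr (- 2)) \<le> 3 - 2 / (real N + 1)"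
proof (induction N)
  case 0 then show ?case by simp
next
  case (Suc N)
  have e: "(real_of_int \<bar>a\<bar> + 1) powr (- 2) = 1 / (real_of_int \<bar>a\<bar> + 1)^2" for a
    by (simp add: powr_minus powr_numeral divide_inverse)
  have st1: "2 / (real N + 2)^2 \<le> 2 / ((real N + 1) * (real N + 2))"
    by (rule divide_left_mono) (auto simp: power2_eq_square)
  have st2: "2 / (real N + 1) - 2 / (real N + 2) = 2 / ((real N + 1) * (real N + 2))"
    by (simp add: field_simps)
  have st: "2 / (real N + 2)^2 \<le> 2 / (real N + 1) - 2 / (real N + 2)"
    using st1 st2 by simp
  have "(\<Sum>a\<in>{- int (Suc N)..int (Suc N)}. (real_of_int \<bar>a\<bar> + 1) powr (- 2))
      = 2 / (real N + 2)^2 + (\<Sum>a\<in>{- int N..int N}. (real_of_int \<bar>a\<bar> + 1) powr (- 2))"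
    unfolding int_sym_interval_Suc e by (simp add: add.commute add.left_commute)
  also have "\<dots> \<le> 2 / (real N + 2)^2 + (3 - 2 / (real N + 1))" using Suc by simp
  also have "\<dots> \<le> 3 - 2 / (real (Suc N) + 1)"
  proof -
    have x3: "real (Suc N) + 1 = real N + 2" by simp
    show ?thesis unfolding x3 using st by linarith
  qed
  finally show ?case .
qed

definition nn :: "int \<times> int \<Rightarrow> real" where
  "nn \<xi> = real_of_int ((fst \<xi>)^2 + (snd \<xi>)^2)"

lemma nn_ge1: "\<xi> \<noteq> (0,0) \<Longrightarrow> nn \<xi> \<ge> 1"
proof -
  assume "\<xi> \<noteq> (0,0)"
  then have "fst \<xi> \<noteq> 0 \<or> snd \<xi> \<noteq> 0" by (cases \<xi>) auto
  then have "(fst \<xi>)^2 + (snd \<xi>)^2 \<ge> (1::int)"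
    by (metis add.commute add_increasing2 int_one_le_iff_zero_less zero_le_power2 zero_less_power2)
  then show ?thesis unfolding nn_def by linarith
qed

lemma int_prod_le:
  fixes a b :: int
  assumes "(a, b) \<noteq> (0,0)"
  shows "(\<bar>a\<bar> + 1) * (\<bar>b\<bar> + 1) \<le> 4 * (a^2 + b^2)"
proof (cases "\<bar>b\<bar> \<le> \<bar>a\<bar>")
  case True
  then have a1: "\<bar>a\<bar> \<ge> 1" using assms by auto
  have "(\<bar>a\<bar> + 1) * (\<bar>b\<bar> + 1) \<le> (\<bar>a\<bar> + 1) * (\<bar>a\<bar> + 1)"
    using True by (intro mult_left_mono) auto
  also have "\<dots> \<le> (2 * \<bar>a\<bar>) * (2 * \<bar>a\<bar>)" using a1 by (intro mult_mono) auto
  also have "\<dots> = 4 * a^2" by (simp add: power2_eq_square)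
  finally have "(\<bar>a\<bar> + 1) * (\<bar>b\<bar> + 1) \<le> 4 * a^2" .
  moreover have "4 * a^2 \<le> 4 * (a^2 + b^2)" by simp
  ultimately show ?thesis by (rule order_trans)
next
  case False
  then have b1: "\<bar>b\<bar> \<ge> 1" by auto
  have "(\<bar>a\<bar> + 1) * (\<bar>b\<bar> + 1) \<le> (\<bar>b\<bar> + 1) * (\<bar>b\<bar> + 1)"
    using False by (intro mult_right_mono) auto
  also have "\<dots> \<le> (2 * \<bar>b\<bar>) * (2 * \<bar>b\<bar>)" using b1 by (intro mult_mono) auto
  also have "\<dots> = 4 * b^2" by (simp add: power2_eq_square)
  finally have "(\<bar>a\<bar> + 1) * (\<bar>b\<bar> + 1) \<le> 4 * b^2" .
  moreover have "4 * b^2 \<le> 4 * (a^2 + b^2)" by simp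
  ultimately show ?thesis by (rule order_trans)
qed

lemma nn_powr_le:
  assumes "\<xi> \<noteq> (0,0)" "\<beta> \<ge> 0"
  shows "nn \<xi> powr (- \<beta>) \<le> 4 powr \<beta> * ((real_of_int \<bar>fst \<xi>\<bar> + 1) powr (- \<beta>) * (real_of_int \<bar>snd \<xi>\<bar> + 1) powr (- \<beta>))"
proof -
  obtain a b where ab: "\<xi> = (a, b)" by (cases \<xi>)
  have i: "(\<bar>a\<bar> + 1) * (\<bar>b\<bar> + 1) \<le> 4 * (a^2 + b^2)" using int_prod_le[of a b] assms(1) ab by simp
  have i2: "real_of_int ((\<bar>a\<bar> + 1) * (\<bar>b\<bar> + 1)) \<le> real_of_int (4 * (a^2 + b^2))"
    using i by (simp only: of_int_le_iff)
  have i3: "real_of_int (4 * (a^2 + b^2)) = 4 * real_of_int (a^2 + b^2)" by simp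
  have i4: "nn \<xi> = real_of_int (a^2 + b^2)" by (simp add: nn_def ab)
  have i5: "real_of_int ((\<bar>a\<bar> + 1) * (\<bar>b\<bar> + 1)) \<le> 4 * nn \<xi>"
    using i2 unfolding i3 i4 .
  have le: "real_of_int ((\<bar>a\<bar> + 1) * (\<bar>b\<bar> + 1)) / 4 \<le> nn \<xi>"
    using i5 by (simp only: divide_le_eq) simp
  have pos: "0 < real_of_int ((\<bar>a\<bar> + 1) * (\<bar>b\<bar> + 1)) / 4"
    by (simp add: add_pos_nonneg mult_pos_pos)
  have "nn \<xi> powr (- \<beta>) \<le> (real_of_int ((\<bar>a\<bar> + 1) * (\<bar>b\<bar> + 1)) / 4) powr (- \<beta>)"
    by (rule powr_mono2'[OF _ pos le]) (use assms in simp)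
  also have "\<dots> = 4 powr \<beta> * ((real_of_int \<bar>a\<bar> + 1) powr (- \<beta>) * (real_of_int \<bar>b\<bar> + 1) powr (- \<beta>))"
  proof -
    have p1: "real_of_int \<bar>a\<bar> + 1 > 0" "real_of_int \<bar>b\<bar> + 1 > 0" by auto
    define x where "x = real_of_int \<bar>a\<bar> + 1"
    define y where "y = real_of_int \<bar>b\<bar> + 1"
    have xy: "x > 0" "y > 0" using p1 by (auto simp: x_def y_def)
    have e0: "(real_of_int ((\<bar>a\<bar> + 1) * (\<bar>b\<bar> + 1)) / 4) = (x * y) / 4"
      by (simp add: x_def y_def)
    have e1: "((x * y) / 4) powr (- \<beta>) = (x * y) powr (- \<beta>) / 4 powr (- \<beta>)"
      using xy by (simp add: powr_divide)
    have e2: "(x * y) powr (- \<beta>) = x powr (- \<beta>) * y powr (- \<beta>)"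
      using xy by (simp add: powr_mult)
    have e3: "(4::real) powr (- \<beta>) = inverse (4 powr \<beta>)" by (simp add: powr_minus)
    have "(real_of_int ((\<bar>a\<bar> + 1) * (\<bar>b\<bar> + 1)) / 4) powr (- \<beta>) = 4 powr \<beta> * (x powr (- \<beta>) * y powr (- \<beta>))"
      unfolding e0 e1 e2 e3 by (simp add: divide_inverse)
    then show ?thesis by (simp add: x_def y_def)
  qed
  finally show ?thesis unfolding ab by simp
qed

lemma box_sum:
  assumes "finite S" "S \<subseteq> {- int N..int N} \<times> {- int N..int N}" "(0,0) \<notin> S" "\<beta> \<ge> 0"
  shows "(\<Sum>\<xi>\<in>S. nn \<xi> powr (- \<beta>)) \<le> 4 powr \<beta> * (\<Sum>a\<in>{- int N..int N}. (real_of_int \<bar>a\<bar> + 1) powr (- \<beta>))^2"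
proof -
  define g where "g a = (real_of_int \<bar>a\<bar> + 1) powr (- \<beta>)" for a :: int
  have g0: "g a \<ge> 0" for a unfolding g_def by simp
  have "(\<Sum>\<xi>\<in>S. nn \<xi> powr (- \<beta>)) \<le> (\<Sum>\<xi>\<in>S. 4 powr \<beta> * (g (fst \<xi>) * g (snd \<xi>)))"
  proof (rule sum_mono)
    fix \<xi> assume "\<xi> \<in> S"
    then have "\<xi> \<noteq> (0,0)" using assms(3) by auto
    then show "nn \<xi> powr (- \<beta>) \<le> 4 powr \<beta> * (g (fst \<xi>) * g (snd \<xi>))"
      unfolding g_def by (rule nn_powr_le) (use assms(4) in auto)
  qed
  also have "\<dots> \<le> (\<Sum>\<xi>\<in>{- int N..int N} \<times> {- int N..int N}. 4 powr \<beta> * (g (fst \<xi>) * g (snd \<xi>)))"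
    by (rule sum_mono2[OF _ assms(2)]) (simp_all add: g0)
  also have "\<dots> = 4 powr \<beta> * (\<Sum>\<xi>\<in>{- int N..int N} \<times> {- int N..int N}. g (fst \<xi>) * g (snd \<xi>))"
    by (rule sum_distrib_left[symmetric])
  also have "(\<Sum>\<xi>\<in>{- int N..int N} \<times> {- int N..int N}. g (fst \<xi>) * g (snd \<xi>))
      = (\<Sum>a\<in>{- int N..int N}. g a) * (\<Sum>a\<in>{- int N..int N}. g a)"
    unfolding sum_product sum.cartesian_product by (rule sum.cong) auto
  also have "\<dots> = (\<Sum>a\<in>{- int N..int N}. g a)^2" by (rule power2_eq_square[symmetric])
  finally show ?thesis unfolding g_def .
qed

lemma ball_sum:
  fixes \<beta> R :: real
  assumes "0 \<le> \<beta>" "\<beta> < 1" "R > 0" "finite F"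
  shows "(\<Sum>\<xi>\<in>{\<xi>\<in>F. \<xi> \<noteq> (0,0) \<and> nn \<xi> \<le> R}. nn \<xi> powr (- \<beta>)) \<le> 16 / (1 - \<beta>)^2 * R powr (1 - \<beta>)"
proof (cases "R < 1")
  case True
  have "\<not> (\<xi> \<noteq> (0,0) \<and> nn \<xi> \<le> R)" for \<xi>
  proof
    assume a: "\<xi> \<noteq> (0,0) \<and> nn \<xi> \<le> R"
    then have "nn \<xi> \<ge> 1" using nn_ge1 by blast
    then show False using a True by linarith
  qed
  then have e: "{\<xi>\<in>F. \<xi> \<noteq> (0,0) \<and> nn \<xi> \<le> R} = {}" by blast
  show ?thesis unfolding e using assms by simp
next
  case False
  define N where "N = nat \<lfloor>sqrt R\<rfloor>"
  have sR: "sqrt R \<ge> 1" using False by simp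
  have Nle: "real N \<le> sqrt R" unfolding N_def using sR by linarith
  have sub: "{\<xi>\<in>F. \<xi> \<noteq> (0,0) \<and> nn \<xi> \<le> R} \<subseteq> {- int N..int N} \<times> {- int N..int N}"
  proof
    fix \<xi> assume "\<xi> \<in> {\<xi>\<in>F. \<xi> \<noteq> (0,0) \<and> nn \<xi> \<le> R}"
    then have le: "real_of_int ((fst \<xi>)^2 + (snd \<xi>)^2) \<le> R" by (simp add: nn_def)
    have "real_of_int ((fst \<xi>)^2) \<le> real_of_int ((fst \<xi>)^2 + (snd \<xi>)^2)" by (simp only: of_int_le_iff) simp
    then have "real_of_int ((fst \<xi>)^2) \<le> R" using le by linarith
    then have "real_of_int \<bar>fst \<xi>\<bar> \<le> sqrt R" by (simp add: real_le_rsqrt)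
    then have a: "\<bar>fst \<xi>\<bar> \<le> int N" unfolding N_def using sR by (simp add: le_floor_iff)
    have "real_of_int ((snd \<xi>)^2) \<le> real_of_int ((fst \<xi>)^2 + (snd \<xi>)^2)" by (simp only: of_int_le_iff) simp
    then have "real_of_int ((snd \<xi>)^2) \<le> R" using le by linarith
    then have "real_of_int \<bar>snd \<xi>\<bar> \<le> sqrt R" by (simp add: real_le_rsqrt)
    then have b: "\<bar>snd \<xi>\<bar> \<le> int N" unfolding N_def using sR by (simp add: le_floor_iff)
    show "\<xi> \<in> {- int N..int N} \<times> {- int N..int N}" using a b by (cases \<xi>) auto
  qed
  have "(\<Sum>\<xi>\<in>{\<xi>\<in>F. \<xi> \<noteq> (0,0) \<and> nn \<xi> \<le> R}. nn \<xi> powr (- \<beta>))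
      \<le> 4 powr \<beta> * (\<Sum>a\<in>{- int N..int N}. (real_of_int \<bar>a\<bar> + 1) powr (- \<beta>))^2"
    by (rule box_sum[OF _ sub]) (use assms in auto)
  also have "\<dots> \<le> 4 powr \<beta> * (2 * (real N + 1) powr (1 - \<beta>) / (1 - \<beta>))^2"
    by (intro mult_left_mono power_mono sum1d_beta) (use assms in \<open>auto intro: sum_nonneg\<close>)
  also have "\<dots> \<le> 4 powr \<beta> * (2 * (2 * sqrt R) powr (1 - \<beta>) / (1 - \<beta>))^2"
  proof -
    have N1: "real N + 1 \<le> 2 * sqrt R" using Nle sR by linarith
    have "(real N + 1) powr (1 - \<beta>) \<le> (2 * sqrt R) powr (1 - \<beta>)"
      by (rule powr_mono2) (use assms N1 in auto)
    then show ?thesis using assms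
      by (intro mult_left_mono power_mono divide_right_mono) auto
  qed
  also have "\<dots> = 16 / (1 - \<beta>)^2 * R powr (1 - \<beta>)"
  proof -
    define p where "p = 1 - \<beta>"
    define A where "A = (2 * sqrt R) powr p"
    have "A * A = ((2 * sqrt R) * (2 * sqrt R)) powr p"
      unfolding A_def by (rule powr_mult[symmetric])
    also have "(2 * sqrt R) * (2 * sqrt R) = 4 * R" using assms by simp
    also have "(4 * R) powr p = 4 powr p * R powr p" by (rule powr_mult)
    finally have AA: "A * A = 4 powr p * R powr p" .
    have f4: "4 powr \<beta> * 4 powr p = (4::real)" unfolding p_def by (simp add: powr_add[symmetric])
    have pp: "p > 0" unfolding p_def using assms by simp
    have "4 powr \<beta> * (2 * A / p)^2 = 4 * (4 powr \<beta> * (A * A)) / p^2"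
      by (simp add: power2_eq_square field_simps)
    also have "\<dots> = 4 * (4 powr \<beta> * 4 powr p * R powr p) / p^2" unfolding AA by (simp add: mult.assoc)
    also have "\<dots> = 16 / p^2 * R powr p" unfolding f4 by simp
    finally show ?thesis unfolding A_def p_def .
  qed
  finally show ?thesis .
qed

lemma total_sum2:
  assumes "finite F"
  shows "(\<Sum>\<xi>\<in>{\<xi>\<in>F. \<xi> \<noteq> (0,0)}. nn \<xi> powr (- 2)) \<le> 144"
proof -
  obtain N :: nat where N: "\<forall>\<xi>\<in>F. \<bar>fst \<xi>\<bar> \<le> int N \<and> \<bar>snd \<xi>\<bar> \<le> int N"
  proof
    show "\<forall>\<xi>\<in>F. \<bar>fst \<xi>\<bar> \<le> int (\<Sum>\<xi>\<in>F. nat \<bar>fst \<xi>\<bar> + nat \<bar>snd \<xi>\<bar>) \<and> \<bar>snd \<xi>\<bar> \<le> int (\<Sum>\<xi>\<in>F. nat \<bar>fst \<xi>\<bar> + nat \<bar>snd \<xi>\<bar>)"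
    proof
      fix \<xi> assume x: "\<xi> \<in> F"
      have "nat \<bar>fst \<xi>\<bar> + nat \<bar>snd \<xi>\<bar> \<le> (\<Sum>\<xi>\<in>F. nat \<bar>fst \<xi>\<bar> + nat \<bar>snd \<xi>\<bar>)"
        by (rule member_le_sum) (use x assms in auto)
      then show "\<bar>fst \<xi>\<bar> \<le> int (\<Sum>\<xi>\<in>F. nat \<bar>fst \<xi>\<bar> + nat \<bar>snd \<xi>\<bar>) \<and> \<bar>snd \<xi>\<bar> \<le> int (\<Sum>\<xi>\<in>F. nat \<bar>fst \<xi>\<bar> + nat \<bar>snd \<xi>\<bar>)"
        by linarith
    qed
  qed
  have sub: "{\<xi>\<in>F. \<xi> \<noteq> (0,0)} \<subseteq> {- int N..int N} \<times> {- int N..int N}"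
    using N by (auto simp: mem_Times_iff abs_le_iff)
  have "(\<Sum>\<xi>\<in>{\<xi>\<in>F. \<xi> \<noteq> (0,0)}. nn \<xi> powr (- 2)) \<le> 4 powr 2 * (\<Sum>a\<in>{- int N..int N}. (real_of_int \<bar>a\<bar> + 1) powr (- 2))^2"
    using box_sum[OF _ sub, of 2] assms by simp
  also have "\<dots> \<le> 4 powr 2 * 3^2"
  proof -
    have "(\<Sum>a\<in>{- int N..int N}. (real_of_int \<bar>a\<bar> + 1) powr (- 2)) \<le> 3"
    proof -
      have "2 / (real N + 1) \<ge> 0" by simp
      then show ?thesis using sum1d_two[of N] by linarith
    qed
    then show ?thesis by (intro mult_left_mono power_mono) (auto intro: sum_nonneg)
  qed
  also have "\<dots> = 144" by simp
  finally show ?thesis .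
qed

lemma pdiv: "(k::real) > 0 \<Longrightarrow> (b::real) > 0 \<Longrightarrow> (b / k) powr e = k powr (- e) * b powr e"
  unfolding powr_divide powr_minus by (simp add: divide_inverse)

lemma pxm: "0 < (X::real) \<Longrightarrow> X powr e * X = X powr (e + 1)"
  using powr_mult_base[of X e] by (simp add: mult.commute add.commute)

lemma pxm2: "0 < (X::real) \<Longrightarrow> X * X powr e = X powr (e + 1)"
  using powr_mult_base[of X e] by (simp add: add.commute)

lemma pnegle: "0 < (b::real) \<Longrightarrow> b \<le> a \<Longrightarrow> e \<le> 0 \<Longrightarrow> a powr e \<le> b powr e"
  using powr_mono2'[of e b a] by simp

lemma p4le: "e \<le> n \<Longrightarrow> (4::real) powr e \<le> 4 powr n"
  by (rule powr_mono) auto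

lemma kA_a:
  fixes X Y Z c \<alpha> :: real
  assumes "0 < X" "0 < Y" "0 < Z" "0 < \<alpha>" "\<alpha> < 1" "X / 4 \<le> Z" "c^2 \<le> X * Y"
  shows "X powr (-1-\<alpha>) * c^2 * Z powr (\<alpha>-2) \<le> 16 * Y * X powr (-2)"
proof -
  have "X powr (-1-\<alpha>) * c^2 \<le> X powr (-1-\<alpha>) * (X * Y)"
    by (rule mult_left_mono) (use assms in auto)
  also have "\<dots> = (X powr (-1-\<alpha>) * X) * Y" by (simp add: mult.assoc)
  also have "X powr (-1-\<alpha>) * X = X powr (-\<alpha>)" using pxm[of X "-1-\<alpha>"] assms by simp
  finally have t1: "X powr (-1-\<alpha>) * c^2 \<le> X powr (-\<alpha>) * Y" .
  have "Z powr (\<alpha>-2) \<le> (X/4) powr (\<alpha>-2)" by (rule pnegle) (use assms in auto)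
  also have "\<dots> = 4 powr (2 - \<alpha>) * X powr (\<alpha> - 2)" using assms by (simp add: pdiv)
  also have "\<dots> \<le> 16 * X powr (\<alpha> - 2)"
  proof -
    have "(4::real) powr (2 - \<alpha>) \<le> 4 powr 2" by (rule p4le) (use assms in auto)
    then show ?thesis by (intro mult_right_mono) auto
  qed
  finally have t2: "Z powr (\<alpha>-2) \<le> 16 * X powr (\<alpha> - 2)" .
  have "X powr (-1-\<alpha>) * c^2 * Z powr (\<alpha>-2) \<le> (X powr (-\<alpha>) * Y) * (16 * X powr (\<alpha> - 2))"
    by (rule mult_mono[OF t1 t2]) (use assms in auto)
  also have "\<dots> = 16 * Y * (X powr (-\<alpha>) * X powr (\<alpha> - 2))" by (simp add: algebra_simps)
  also have "X powr (-\<alpha>) * X powr (\<alpha> - 2) = X powr (-2)" by (simp add: powr_add[symmetric])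
  finally show ?thesis .
qed

lemma kA_b:
  fixes X Y Z c \<alpha> :: real
  assumes "0 < X" "0 < Y" "0 < Z" "0 < \<alpha>" "\<alpha> < 1" "Y / 4 \<le> Z" "c^2 \<le> X * Z"
  shows "X powr (-1-\<alpha>) * c^2 * Z powr (\<alpha>-2) \<le> 4 * X powr (-\<alpha>) * Y powr (\<alpha> - 1)"
proof -
  have "X powr (-1-\<alpha>) * c^2 * Z powr (\<alpha>-2) \<le> X powr (-1-\<alpha>) * (X * Z) * Z powr (\<alpha>-2)"
    by (intro mult_right_mono mult_left_mono) (use assms in auto)
  also have "\<dots> = X powr (-\<alpha>) * Z powr (\<alpha> - 1)"
  proof -
    have a: "X powr (-1-\<alpha>) * X = X powr (-\<alpha>)" using pxm[of X "-1-\<alpha>"] assms by simp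
    have b: "Z * Z powr (\<alpha>-2) = Z powr (\<alpha> - 1)" using pxm2[of Z "\<alpha>-2"] assms by simp
    show ?thesis by (unfold a[symmetric] b[symmetric]) (simp only: mult_ac)
  qed
  also have "\<dots> \<le> X powr (-\<alpha>) * (4 * Y powr (\<alpha> - 1))"
  proof (rule mult_left_mono)
    have "Z powr (\<alpha> - 1) \<le> (Y/4) powr (\<alpha> - 1)" by (rule pnegle) (use assms in auto)
    also have "\<dots> = 4 powr (1 - \<alpha>) * Y powr (\<alpha> - 1)" using assms by (simp add: pdiv)
    also have "\<dots> \<le> 4 * Y powr (\<alpha> - 1)"
    proof -
      have "(4::real) powr (1 - \<alpha>) \<le> 4 powr 1" by (rule p4le) (use assms in auto)
      then show ?thesis by (intro mult_right_mono) auto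
    qed
    finally show "Z powr (\<alpha> - 1) \<le> 4 * Y powr (\<alpha> - 1)" .
  qed simp
  finally show ?thesis by (simp add: algebra_simps)
qed

lemma kA_c:
  fixes X Y Z c \<alpha> :: real
  assumes "0 < X" "0 < Y" "0 < Z" "0 < \<alpha>" "\<alpha> < 1" "Y / 4 \<le> X" "c^2 \<le> X * Z"
  shows "X powr (-1-\<alpha>) * c^2 * Z powr (\<alpha>-2) \<le> 4 * Y powr (-\<alpha>) * Z powr (\<alpha> - 1)"
proof -
  have "X powr (-1-\<alpha>) * c^2 * Z powr (\<alpha>-2) \<le> X powr (-1-\<alpha>) * (X * Z) * Z powr (\<alpha>-2)"
    by (intro mult_right_mono mult_left_mono) (use assms in auto)
  also have "\<dots> = X powr (-\<alpha>) * Z powr (\<alpha> - 1)"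
  proof -
    have a: "X powr (-1-\<alpha>) * X = X powr (-\<alpha>)" using pxm[of X "-1-\<alpha>"] assms by simp
    have b: "Z * Z powr (\<alpha>-2) = Z powr (\<alpha> - 1)" using pxm2[of Z "\<alpha>-2"] assms by simp
    show ?thesis by (unfold a[symmetric] b[symmetric]) (simp only: mult_ac)
  qed
  also have "\<dots> \<le> (4 * Y powr (-\<alpha>)) * Z powr (\<alpha> - 1)"
  proof (rule mult_right_mono)
    have "X powr (-\<alpha>) \<le> (Y/4) powr (-\<alpha>)" by (rule pnegle) (use assms in auto)
    also have "\<dots> = 4 powr \<alpha> * Y powr (-\<alpha>)" using assms by (simp add: pdiv)
    also have "\<dots> \<le> 4 * Y powr (-\<alpha>)"
    proof -
      have "(4::real) powr \<alpha> \<le> 4 powr 1" by (rule p4le) (use assms in auto)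
      then show ?thesis by (intro mult_right_mono) auto
    qed
    finally show "X powr (-\<alpha>) \<le> 4 * Y powr (-\<alpha>)" .
  qed simp
  finally show ?thesis by (simp add: algebra_simps)
qed

lemma kB_a:
  fixes X Y Z c \<alpha> :: real
  assumes "0 < X" "0 < Y" "0 < Z" "0 < \<alpha>" "\<alpha> < 1" "X / 4 \<le> Z" "c^2 \<le> X * Y"
  shows "X powr (-1-\<alpha>) * c^2 * Z powr (-3) * Y powr \<alpha> \<le> 64 * X powr (-3-\<alpha>) * Y powr (1 + \<alpha>)"
proof -
  have "X powr (-1-\<alpha>) * c^2 \<le> X powr (-1-\<alpha>) * (X * Y)"
    by (rule mult_left_mono) (use assms in auto)
  also have "\<dots> = (X powr (-1-\<alpha>) * X) * Y" by (simp add: mult.assoc)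
  also have "X powr (-1-\<alpha>) * X = X powr (-\<alpha>)" using pxm[of X "-1-\<alpha>"] assms by simp
  finally have t1: "X powr (-1-\<alpha>) * c^2 \<le> X powr (-\<alpha>) * Y" .
  have "Z powr (-3) \<le> (X/4) powr (-3)" by (rule pnegle) (use assms in auto)
  also have "\<dots> = 4 powr 3 * X powr (-3)" using assms by (simp add: pdiv)
  also have "\<dots> = 64 * X powr (-3)" by simp
  finally have t2: "Z powr (-3) \<le> 64 * X powr (-3)" .
  have "X powr (-1-\<alpha>) * c^2 * Z powr (-3) * Y powr \<alpha> \<le> (X powr (-\<alpha>) * Y) * (64 * X powr (-3)) * Y powr \<alpha>"
    by (intro mult_right_mono mult_mono[OF t1 t2]) (use assms in auto)
  also have "\<dots> = 64 * (X powr (-\<alpha>) * X powr (-3)) * (Y * Y powr \<alpha>)" by (simp only: mult_ac)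
  also have "\<dots> = 64 * X powr (-3-\<alpha>) * Y powr (1 + \<alpha>)"
  proof -
    have e1: "X powr (-\<alpha>) * X powr (-3) = X powr (-3-\<alpha>)"
    proof -
      have "X powr (-\<alpha>) * X powr (-3) = X powr (-\<alpha> + -3)" by (rule powr_add[symmetric])
      also have "-\<alpha> + -3 = -3-\<alpha>" by simp
      finally show ?thesis .
    qed
    have e2: "Y * Y powr \<alpha> = Y powr (1 + \<alpha>)" using pxm2[of Y \<alpha>] assms by (simp add: add.commute)
    show ?thesis unfolding e1 e2 ..
  qed
  finally show ?thesis .
qed

lemma kB_b:
  fixes X Y Z c \<alpha> :: real
  assumes "0 < X" "0 < Y" "0 < Z" "0 < \<alpha>" "\<alpha> < 1" "Y / 4 \<le> Z" "c^2 \<le> X * Z"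
  shows "X powr (-1-\<alpha>) * c^2 * Z powr (-3) * Y powr \<alpha> \<le> 16 * X powr (-\<alpha>) * Y powr (\<alpha> - 2)"
proof -
  have "X powr (-1-\<alpha>) * c^2 * Z powr (-3) * Y powr \<alpha> \<le> X powr (-1-\<alpha>) * (X * Z) * Z powr (-3) * Y powr \<alpha>"
    by (intro mult_right_mono mult_left_mono) (use assms in auto)
  also have "\<dots> = X powr (-\<alpha>) * Z powr (-2) * Y powr \<alpha>"
  proof -
    have a: "X powr (-1-\<alpha>) * X = X powr (-\<alpha>)" using pxm[of X "-1-\<alpha>"] assms by simp
    have b: "Z * Z powr (-3) = Z powr (-2)" using pxm2[of Z "-3"] assms by simp
    show ?thesis by (unfold a[symmetric] b[symmetric]) (simp only: mult_ac)
  qed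
  also have "\<dots> \<le> X powr (-\<alpha>) * (16 * Y powr (-2)) * Y powr \<alpha>"
  proof (intro mult_right_mono mult_left_mono)
    have "Z powr (-2) \<le> (Y/4) powr (-2)" by (rule pnegle) (use assms in auto)
    also have "\<dots> = 16 * Y powr (-2)" using assms by (simp add: pdiv)
    finally show "Z powr (-2) \<le> 16 * Y powr (-2)" .
  qed simp_all
  also have "\<dots> = 16 * X powr (-\<alpha>) * (Y powr (-2) * Y powr \<alpha>)" by (simp add: algebra_simps)
  also have "Y powr (-2) * Y powr \<alpha> = Y powr (\<alpha> - 2)" by (simp add: powr_add[symmetric])
  finally show ?thesis .
qed

lemma kB_c:
  fixes X Y Z c \<alpha> :: real
  assumes "0 < X" "0 < Y" "0 < Z" "0 < \<alpha>" "\<alpha> < 1" "Y / 4 \<le> X" "c^2 \<le> X * Z"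
  shows "X powr (-1-\<alpha>) * c^2 * Z powr (-3) * Y powr \<alpha> \<le> 4 * Z powr (-2)"
proof -
  have "X powr (-1-\<alpha>) * c^2 * Z powr (-3) * Y powr \<alpha> \<le> X powr (-1-\<alpha>) * (X * Z) * Z powr (-3) * Y powr \<alpha>"
    by (intro mult_right_mono mult_left_mono) (use assms in auto)
  also have "\<dots> = X powr (-\<alpha>) * Z powr (-2) * Y powr \<alpha>"
  proof -
    have a: "X powr (-1-\<alpha>) * X = X powr (-\<alpha>)" using pxm[of X "-1-\<alpha>"] assms by simp
    have b: "Z * Z powr (-3) = Z powr (-2)" using pxm2[of Z "-3"] assms by simp
    show ?thesis by (unfold a[symmetric] b[symmetric]) (simp only: mult_ac)
  qed
  also have "\<dots> \<le> (4 * Y powr (-\<alpha>)) * Z powr (-2) * Y powr \<alpha>"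
  proof (intro mult_right_mono)
    have "X powr (-\<alpha>) \<le> (Y/4) powr (-\<alpha>)" by (rule pnegle) (use assms in auto)
    also have "\<dots> = 4 powr \<alpha> * Y powr (-\<alpha>)" using assms by (simp add: pdiv)
    also have "\<dots> \<le> 4 * Y powr (-\<alpha>)"
    proof -
      have "(4::real) powr \<alpha> \<le> 4 powr 1" by (rule p4le) (use assms in auto)
      then show ?thesis by (intro mult_right_mono) auto
    qed
    finally show "X powr (-\<alpha>) \<le> 4 * Y powr (-\<alpha>)" .
  qed simp_all
  also have "\<dots> = 4 * Z powr (-2) * (Y powr (-\<alpha>) * Y powr \<alpha>)" by (simp add: algebra_simps)
  also have "Y powr (-\<alpha>) * Y powr \<alpha> = 1" using assms by (simp add: powr_add[symmetric])
  finally show ?thesis by simp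
qed

lemma sqrt_tri:
  fixes a1 a2 b1 b2 :: real
  shows "sqrt (a1^2 + a2^2) - sqrt (b1^2 + b2^2) \<le> sqrt ((a1 - b1)^2 + (a2 - b2)^2)"
  using real_sqrt_sum_squares_triangle_ineq[of "a1 - b1" b1 "a2 - b2" b2] by simp

lemma region_big:
  fixes X Y Z :: real
  assumes "0 \<le> X" "0 \<le> Y" "0 \<le> Z" "sqrt X - sqrt Y \<le> sqrt Z" "4 * Y \<le> X"
  shows "X / 4 \<le> Z"
proof -
  have "sqrt Y \<le> sqrt (X / 4)" using assms by (intro real_sqrt_le_mono) auto
  also have "sqrt (X / 4) = sqrt X / 2" by (simp add: real_sqrt_divide)
  finally have "sqrt X / 2 \<le> sqrt Z" using assms by linarith
  then have "(sqrt X / 2)^2 \<le> (sqrt Z)^2" by (intro power_mono) (use assms(1) in auto)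
  moreover have "(sqrt X / 2)^2 = X / 4" using assms(1) by (simp add: power_divide)
  moreover have "(sqrt Z)^2 = Z" using assms(3) by simp
  ultimately show ?thesis by simp
qed

definition cc :: "real \<Rightarrow> real" where "cc L = (2 * pi / L)^2"

lemma cc_pos: "L > 0 \<Longrightarrow> cc L > 0" by (simp add: cc_def)

lemma ksq_eq: "ksq L \<xi> = cc L * nn \<xi>"
  unfolding ksq_def kx_def ky_def cc_def nn_def of_int_add of_int_power power_mult_distrib
  by (simp only: distrib_left)

lemma ksq_ge: "L > 0 \<Longrightarrow> \<xi> \<noteq> (0,0) \<Longrightarrow> ksq L \<xi> \<ge> cc L"
  using nn_ge1[of \<xi>] cc_pos[of L] by (simp add: ksq_eq)

lemma ksq_pos: "L > 0 \<Longrightarrow> \<xi> \<noteq> (0,0) \<Longrightarrow> ksq L \<xi> > 0"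
  using ksq_ge cc_pos by (meson less_le_trans)

lemma ksq_nonneg: "ksq L \<xi> \<ge> 0" by (simp add: ksq_def)

lemma wball:
  assumes L: "L > 0" and b: "0 \<le> \<beta>" "\<beta> < 1" and R: "R > 0" and F: "finite F"
  shows "(\<Sum>\<xi>\<in>{\<xi>\<in>F. \<xi> \<noteq> (0,0) \<and> ksq L \<xi> \<le> R}. ksq L \<xi> powr (- \<beta>)) \<le> 16 / (1 - \<beta>)^2 / cc L * R powr (1 - \<beta>)"
proof -
  have c: "cc L > 0" using cc_pos[OF L] .
  have set: "{\<xi>\<in>F. \<xi> \<noteq> (0,0) \<and> ksq L \<xi> \<le> R} = {\<xi>\<in>F. \<xi> \<noteq> (0,0) \<and> nn \<xi> \<le> R / cc L}"
    using c by (auto simp: ksq_eq field_simps)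
  have "(\<Sum>\<xi>\<in>{\<xi>\<in>F. \<xi> \<noteq> (0,0) \<and> ksq L \<xi> \<le> R}. ksq L \<xi> powr (- \<beta>))
      = cc L powr (- \<beta>) * (\<Sum>\<xi>\<in>{\<xi>\<in>F. \<xi> \<noteq> (0,0) \<and> nn \<xi> \<le> R / cc L}. nn \<xi> powr (- \<beta>))"
    unfolding set sum_distrib_left by (rule sum.cong) (auto simp: ksq_eq powr_mult)
  also have "\<dots> \<le> cc L powr (- \<beta>) * (16 / (1 - \<beta>)^2 * (R / cc L) powr (1 - \<beta>))"
    by (rule mult_left_mono[OF ball_sum]) (use b R c F in auto)
  also have "\<dots> = 16 / (1 - \<beta>)^2 / cc L * R powr (1 - \<beta>)"
  proof -
    have "cc L powr (- \<beta>) * (R / cc L) powr (1 - \<beta>) = R powr (1 - \<beta>) * (cc L powr (- \<beta>) / cc L powr (1 - \<beta>))"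
      by (simp add: powr_divide)
    also have "cc L powr (- \<beta>) / cc L powr (1 - \<beta>) = cc L powr (-1)"
      using c by (simp add: powr_diff[symmetric])
    also have "cc L powr (-1) = 1 / cc L" using c by (simp add: powr_minus divide_inverse)
    finally have e: "cc L powr (- \<beta>) * (R / cc L) powr (1 - \<beta>) = R powr (1 - \<beta>) / cc L" by simp
    have "cc L powr (- \<beta>) * (16 / (1 - \<beta>)^2 * (R / cc L) powr (1 - \<beta>))
       = 16 / (1 - \<beta>)^2 * (cc L powr (- \<beta>) * (R / cc L) powr (1 - \<beta>))" by (simp only: mult_ac)
    also have "\<dots> = 16 / (1 - \<beta>)^2 * (R powr (1 - \<beta>) / cc L)" unfolding e ..
    also have "\<dots> = 16 / (1 - \<beta>)^2 / cc L * R powr (1 - \<beta>)" by simp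
    finally show ?thesis .
  qed
  finally show ?thesis .
qed

lemma wtot:
  assumes L: "L > 0" and F: "finite F"
  shows "(\<Sum>\<xi>\<in>{\<xi>\<in>F. \<xi> \<noteq> (0,0)}. ksq L \<xi> powr (- 2)) \<le> 144 / (cc L)^2"
proof -
  have c: "cc L > 0" using cc_pos[OF L] .
  have "(\<Sum>\<xi>\<in>{\<xi>\<in>F. \<xi> \<noteq> (0,0)}. ksq L \<xi> powr (- 2)) = cc L powr (- 2) * (\<Sum>\<xi>\<in>{\<xi>\<in>F. \<xi> \<noteq> (0,0)}. nn \<xi> powr (- 2))"
    unfolding sum_distrib_left by (rule sum.cong) (auto simp: ksq_eq powr_mult)
  also have "\<dots> \<le> cc L powr (- 2) * 144"
    by (rule mult_left_mono[OF total_sum2[OF F]]) simp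
  also have "cc L powr (- 2) = 1 / (cc L)^2" using c by (simp add: powr_minus powr_numeral divide_inverse)
  finally show ?thesis by simp
qed

definition cr :: "real \<Rightarrow> int \<times> int \<Rightarrow> int \<times> int \<Rightarrow> real" where
  "cr L \<zeta> \<eta> = ky L \<zeta> * kx L \<eta> - kx L \<zeta> * ky L \<eta>"

lemma lag: "(p * s - q * r)^2 \<le> ((q::real)^2 + p^2) * (s^2 + r^2)"
proof -
  have "((q^2 + p^2) * (s^2 + r^2)) - (p * s - q * r)^2 = (p * r + q * s)^2"
    by (simp add: power2_eq_square algebra_simps)
  moreover have "(p * r + q * s)^2 \<ge> 0" by simp
  ultimately show ?thesis by linarith
qed

lemma kx_sub: "kx L (sub \<xi> \<eta>) = kx L \<xi> - kx L \<eta>"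
  by (simp only: kx_def sub_def fst_conv of_int_diff right_diff_distrib)
lemma ky_sub: "ky L (sub \<xi> \<eta>) = ky L \<xi> - ky L \<eta>"
  by (simp only: ky_def sub_def snd_conv of_int_diff right_diff_distrib)

lemma cr1: "(cr L (sub \<xi> \<eta>) \<eta>)^2 \<le> ksq L (sub \<xi> \<eta>) * ksq L \<eta>"
  unfolding cr_def ksq_def by (rule lag)

lemma cr2: "(cr L (sub \<xi> \<eta>) \<eta>)^2 \<le> ksq L \<xi> * ksq L \<eta>"
proof -
  have e: "cr L (sub \<xi> \<eta>) \<eta> = ky L \<xi> * kx L \<eta> - kx L \<xi> * ky L \<eta>"
    unfolding cr_def kx_sub ky_sub by (simp add: algebra_simps)
  show ?thesis unfolding e ksq_def by (rule lag)
qed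

lemma cr3: "(cr L (sub \<xi> \<eta>) \<eta>)^2 \<le> ksq L \<xi> * ksq L (sub \<xi> \<eta>)"
proof -
  have e: "cr L (sub \<xi> \<eta>) \<eta> = ky L (sub \<xi> \<eta>) * kx L \<xi> - kx L (sub \<xi> \<eta>) * ky L \<xi>"
    unfolding cr_def kx_sub ky_sub by (simp add: algebra_simps)
  have "(cr L (sub \<xi> \<eta>) \<eta>)^2 \<le> ksq L (sub \<xi> \<eta>) * ksq L \<xi>"
    unfolding e ksq_def by (rule lag)
  then show ?thesis by (simp add: mult.commute)
qed

lemma tri1: "sqrt (ksq L \<xi>) - sqrt (ksq L \<eta>) \<le> sqrt (ksq L (sub \<xi> \<eta>))"
  unfolding ksq_def kx_sub ky_sub by (rule sqrt_tri)

lemma tri2: "sqrt (ksq L \<eta>) - sqrt (ksq L (sub \<xi> \<eta>)) \<le> sqrt (ksq L \<xi>)"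
  using sqrt_tri[of "kx L \<eta>" "ky L \<eta>" "- kx L (sub \<xi> \<eta>)" "- ky L (sub \<xi> \<eta>)"]
  unfolding ksq_def kx_sub ky_sub by (simp add: algebra_simps power2_commute)

definition KA :: "real \<Rightarrow> real \<Rightarrow> int \<times> int \<Rightarrow> int \<times> int \<Rightarrow> real" where
  "KA L \<alpha> \<xi> \<eta> = (if \<xi> = (0,0) \<or> \<eta> = (0,0) \<or> sub \<xi> \<eta> = (0,0) then 0 else
     sqrt (ksq L \<xi> powr (-1-\<alpha>) * (cr L (sub \<xi> \<eta>) \<eta>)^2 * ksq L (sub \<xi> \<eta>) powr (\<alpha>-2)))"

definition KB :: "real \<Rightarrow> real \<Rightarrow> int \<times> int \<Rightarrow> int \<times> int \<Rightarrow> real" where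
  "KB L \<alpha> \<xi> \<eta> = (if \<xi> = (0,0) \<or> \<eta> = (0,0) \<or> sub \<xi> \<eta> = (0,0) then 0 else
     sqrt (ksq L \<xi> powr (-1-\<alpha>) * (cr L (sub \<xi> \<eta>) \<eta>)^2 * ksq L (sub \<xi> \<eta>) powr (-3) * ksq L \<eta> powr \<alpha>))"

definition "KA1 L \<alpha> \<xi> \<eta> = (if 4 * ksq L \<eta> \<le> ksq L \<xi> then 0 else KA L \<alpha> \<xi> \<eta>)"
definition "KA2 L \<alpha> \<xi> \<eta> = (if 4 * ksq L \<eta> \<le> ksq L \<xi> then KA L \<alpha> \<xi> \<eta> else 0)"
definition "KB1 L \<alpha> \<xi> \<eta> = (if 4 * ksq L \<eta> \<le> ksq L \<xi> then 0 else KB L \<alpha> \<xi> \<eta>)"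
definition "KB2 L \<alpha> \<xi> \<eta> = (if 4 * ksq L \<eta> \<le> ksq L \<xi> then KB L \<alpha> \<xi> \<eta> else 0)"

lemma KA_nonneg: "KA L \<alpha> \<xi> \<eta> \<ge> 0" by (simp add: KA_def)
lemma KB_nonneg: "KB L \<alpha> \<xi> \<eta> \<ge> 0" by (simp add: KB_def)
lemma KA12: "KA1 L \<alpha> \<xi> \<eta> + KA2 L \<alpha> \<xi> \<eta> = KA L \<alpha> \<xi> \<eta>" by (simp add: KA1_def KA2_def)
lemma KB12: "KB1 L \<alpha> \<xi> \<eta> + KB2 L \<alpha> \<xi> \<eta> = KB L \<alpha> \<xi> \<eta>" by (simp add: KB1_def KB2_def)

lemma KA_sq: "\<xi> \<noteq> (0,0) \<Longrightarrow> \<eta> \<noteq> (0,0) \<Longrightarrow> sub \<xi> \<eta> \<noteq> (0,0) \<Longrightarrow>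
   (KA L \<alpha> \<xi> \<eta>)^2 = ksq L \<xi> powr (-1-\<alpha>) * (cr L (sub \<xi> \<eta>) \<eta>)^2 * ksq L (sub \<xi> \<eta>) powr (\<alpha>-2)"
  by (simp add: KA_def)

lemma KB_sq: "\<xi> \<noteq> (0,0) \<Longrightarrow> \<eta> \<noteq> (0,0) \<Longrightarrow> sub \<xi> \<eta> \<noteq> (0,0) \<Longrightarrow>
   (KB L \<alpha> \<xi> \<eta>)^2 = ksq L \<xi> powr (-1-\<alpha>) * (cr L (sub \<xi> \<eta>) \<eta>)^2 * ksq L (sub \<xi> \<eta>) powr (-3) * ksq L \<eta> powr \<alpha>"
  by (simp add: KB_def)

lemma pw: "(Y::real) > 0 \<Longrightarrow> k > 0 \<Longrightarrow> Y powr a * (k * Y) powr b = k powr b * Y powr (a + b)"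
  by (simp add: powr_mult powr_add)

lemma sum_filter_cmult:
  fixes c :: real and g :: "'a \<Rightarrow> real"
  assumes "finite F"
  shows "(\<Sum>x\<in>F. if P x then c * g x else 0) = c * (\<Sum>x\<in>{x\<in>F. P x}. g x)"
proof -
  have "(\<Sum>x\<in>F. if P x then c * g x else 0) = (\<Sum>x\<in>F. c * (if P x then g x else 0))"
    by (rule sum.cong) auto
  then show ?thesis using assms by (simp add: sum.inter_filter sum_distrib_left)
qed

lemma sum_reindex_sub:
  fixes h :: "int \<times> int \<Rightarrow> real"
  shows "(\<Sum>\<xi>\<in>F. h (sub \<xi> \<eta>)) = (\<Sum>\<zeta>\<in>(\<lambda>\<xi>. sub \<xi> \<eta>) ` F. h \<zeta>)"
  by (rule sum.reindex[symmetric, unfolded comp_def]) (auto simp: inj_on_def sub_def prod_eq_iff)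

lemma HA1:
  assumes L: "L > 0" and a: "0 < \<alpha>" "\<alpha> < 1" and F: "finite F"
  shows "(\<Sum>\<xi>\<in>F. (KA1 L \<alpha> \<xi> \<eta>)^2) \<le> 256 / ((1 - \<alpha>)^2 * cc L) + 64 / (\<alpha>^2 * cc L)"
proof (cases "\<eta> = (0,0)")
  case True
  then have "KA1 L \<alpha> \<xi> \<eta> = 0" for \<xi> by (simp add: KA1_def KA_def)
  then show ?thesis using cc_pos[OF L] by simp
next
  case False
  have c: "cc L > 0" using cc_pos[OF L] .
  define Y where "Y = ksq L \<eta>"
  have Y: "Y > 0" unfolding Y_def using ksq_pos[OF L False] .
  define f1 where "f1 \<xi> = (if \<xi> \<noteq> (0,0) \<and> ksq L \<xi> \<le> 4 * Y then 4 * Y powr (\<alpha> - 1) * ksq L \<xi> powr (- \<alpha>) else 0)" for \<xi>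
  define g2 where "g2 \<zeta> = (if \<zeta> \<noteq> (0,0) \<and> ksq L \<zeta> \<le> Y / 4 then 4 * Y powr (- \<alpha>) * ksq L \<zeta> powr (- (1 - \<alpha>)) else 0)" for \<zeta>
  have f10: "f1 \<xi> \<ge> 0" for \<xi> by (simp add: f1_def)
  have g20: "g2 \<zeta> \<ge> 0" for \<zeta> by (simp add: g2_def)
  have pt: "(KA1 L \<alpha> \<xi> \<eta>)^2 \<le> f1 \<xi> + g2 (sub \<xi> \<eta>)" for \<xi>
  proof (cases "4 * Y \<le> ksq L \<xi> \<or> \<xi> = (0,0) \<or> sub \<xi> \<eta> = (0,0)")
    case True
    then have "KA1 L \<alpha> \<xi> \<eta> = 0" by (auto simp: KA1_def KA_def Y_def)
    then show ?thesis using f10 g20 by (simp add: add_nonneg_nonneg)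
  next
    case nz: False
    define X where "X = ksq L \<xi>"
    define Z where "Z = ksq L (sub \<xi> \<eta>)"
    have X: "X > 0" unfolding X_def using ksq_pos[OF L] nz by auto
    have Z: "Z > 0" unfolding Z_def using ksq_pos[OF L] nz by auto
    have XY: "X < 4 * Y" using nz by (simp add: X_def)
    have K2: "(KA1 L \<alpha> \<xi> \<eta>)^2 = X powr (-1-\<alpha>) * (cr L (sub \<xi> \<eta>) \<eta>)^2 * Z powr (\<alpha>-2)"
      using nz False by (simp add: KA1_def KA_sq X_def Z_def Y_def)
    show ?thesis
    proof (cases "Y / 4 \<le> Z")
      case True
      have "(KA1 L \<alpha> \<xi> \<eta>)^2 \<le> 4 * X powr (-\<alpha>) * Y powr (\<alpha> - 1)"
        unfolding K2 by (rule kA_b) (use X Y Z a True cr3[of L \<xi> \<eta>] in \<open>auto simp: X_def Z_def\<close>)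
      also have "\<dots> = f1 \<xi>" using nz XY by (simp add: f1_def X_def mult_ac)
      finally show ?thesis using g20 by (smt (verit))
    next
      case False
      have YX: "Y / 4 \<le> X"
        by (rule region_big[of Y Z X]) (use X Y Z False tri2[of L \<eta> \<xi>] in \<open>auto simp: X_def Y_def Z_def\<close>)
      have "(KA1 L \<alpha> \<xi> \<eta>)^2 \<le> 4 * Y powr (-\<alpha>) * Z powr (\<alpha> - 1)"
        unfolding K2 by (rule kA_c) (use X Y Z a YX cr3[of L \<xi> \<eta>] in \<open>auto simp: X_def Z_def\<close>)
      also have "\<dots> = g2 (sub \<xi> \<eta>)" using nz False by (simp add: g2_def Z_def)
      finally show ?thesis using f10 by (smt (verit))
    qed
  qed
  have s1: "(\<Sum>\<xi>\<in>F. f1 \<xi>) \<le> 256 / ((1 - \<alpha>)^2 * cc L)"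
  proof -
    have "(\<Sum>\<xi>\<in>F. f1 \<xi>) = 4 * Y powr (\<alpha> - 1) * (\<Sum>\<xi>\<in>{\<xi>\<in>F. \<xi> \<noteq> (0,0) \<and> ksq L \<xi> \<le> 4 * Y}. ksq L \<xi> powr (- \<alpha>))"
      unfolding f1_def by (rule sum_filter_cmult[OF F])
    also have "\<dots> \<le> 4 * Y powr (\<alpha> - 1) * (16 / (1 - \<alpha>)^2 / cc L * (4 * Y) powr (1 - \<alpha>))"
      by (rule mult_left_mono[OF wball]) (use L a Y F in auto)
    also have "\<dots> = 64 / (1 - \<alpha>)^2 / cc L * (Y powr (\<alpha> - 1) * (4 * Y) powr (1 - \<alpha>))" by (simp add: mult_ac)
    also have "Y powr (\<alpha> - 1) * (4 * Y) powr (1 - \<alpha>) = 4 powr (1 - \<alpha>)" using pw[OF Y, of 4 "\<alpha> - 1" "1 - \<alpha>"] Y by simp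
    also have "64 / (1 - \<alpha>)^2 / cc L * 4 powr (1 - \<alpha>) \<le> 64 / (1 - \<alpha>)^2 / cc L * 4"
      by (rule mult_left_mono) (use p4le[of "1 - \<alpha>" 1] a c in auto)
    also have "\<dots> = 256 / ((1 - \<alpha>)^2 * cc L)" by (simp add: field_simps)
    finally show ?thesis .
  qed
  have s2: "(\<Sum>\<xi>\<in>F. g2 (sub \<xi> \<eta>)) \<le> 64 / (\<alpha>^2 * cc L)"
  proof -
    have "(\<Sum>\<xi>\<in>F. g2 (sub \<xi> \<eta>)) = (\<Sum>\<zeta>\<in>(\<lambda>\<xi>. sub \<xi> \<eta>) ` F. g2 \<zeta>)" by (rule sum_reindex_sub)
    also have "\<dots> = 4 * Y powr (- \<alpha>) * (\<Sum>\<zeta>\<in>{\<zeta>\<in>(\<lambda>\<xi>. sub \<xi> \<eta>) ` F. \<zeta> \<noteq> (0,0) \<and> ksq L \<zeta> \<le> Y / 4}. ksq L \<zeta> powr (- (1 - \<alpha>)))"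
      unfolding g2_def by (rule sum_filter_cmult) (use F in auto)
    also have "\<dots> \<le> 4 * Y powr (- \<alpha>) * (16 / (1 - (1 - \<alpha>))^2 / cc L * (Y / 4) powr (1 - (1 - \<alpha>)))"
      by (rule mult_left_mono[OF wball]) (use L a Y F in auto)
    also have "\<dots> = 64 / \<alpha>^2 / cc L * (Y powr (- \<alpha>) * (1/4 * Y) powr \<alpha>)" by (simp add: mult_ac)
    also have "Y powr (- \<alpha>) * (1/4 * Y) powr \<alpha> = (1/4) powr \<alpha>" using pw[OF Y, of "1/4" "- \<alpha>" \<alpha>] Y by simp
    also have "64 / \<alpha>^2 / cc L * (1/4) powr \<alpha> \<le> 64 / \<alpha>^2 / cc L * 1"
    proof (rule mult_left_mono)
      have "(1::real) \<le> 4 powr \<alpha>" using a by (intro ge_one_powr_ge_zero) auto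
      then show "(1/4::real) powr \<alpha> \<le> 1" by (simp add: powr_divide)
    qed (use a c in auto)
    also have "\<dots> = 64 / (\<alpha>^2 * cc L)" by (simp add: field_simps)
    finally show ?thesis .
  qed
  have "(\<Sum>\<xi>\<in>F. (KA1 L \<alpha> \<xi> \<eta>)^2) \<le> (\<Sum>\<xi>\<in>F. f1 \<xi> + g2 (sub \<xi> \<eta>))" by (rule sum_mono) (rule pt)
  also have "\<dots> = (\<Sum>\<xi>\<in>F. f1 \<xi>) + (\<Sum>\<xi>\<in>F. g2 (sub \<xi> \<eta>))" by (rule sum.distrib)
  finally show ?thesis using s1 s2 by linarith
qed

lemma sum_filter_const:
  fixes c :: real
  assumes "finite F"
  shows "(\<Sum>x\<in>F. if P x then c else 0) = c * real (card {x\<in>F. P x})"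
  using assms by (simp add: sum.inter_filter[symmetric])

lemma count_ball:
  assumes L: "L > 0" and R: "R > 0" and F: "finite F"
  shows "real (card {\<eta>\<in>F. \<eta> \<noteq> (0,0) \<and> ksq L \<eta> \<le> R}) \<le> 16 / cc L * R"
proof -
  have "real (card {\<eta>\<in>F. \<eta> \<noteq> (0,0) \<and> ksq L \<eta> \<le> R}) = (\<Sum>\<eta>\<in>{\<eta>\<in>F. \<eta> \<noteq> (0,0) \<and> ksq L \<eta> \<le> R}. ksq L \<eta> powr (- 0))"
    using ksq_pos[OF L] by (simp add: less_imp_neq[symmetric])
  also have "\<dots> \<le> 16 / (1 - 0)^2 / cc L * R powr (1 - 0)" by (rule wball) (use L R F in auto)
  also have "\<dots> = 16 / cc L * R" using R by simp
  finally show ?thesis .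
qed

lemma HA2:
  assumes L: "L > 0" and a: "0 < \<alpha>" "\<alpha> < 1" and G: "finite G"
  shows "(\<Sum>\<eta>\<in>G. (KA2 L \<alpha> \<xi> \<eta>)^2) \<le> 16 / cc L"
proof (cases "\<xi> = (0,0)")
  case True
  then have "KA2 L \<alpha> \<xi> \<eta> = 0" for \<eta> by (simp add: KA2_def KA_def)
  then show ?thesis using cc_pos[OF L] by simp
next
  case False
  have c: "cc L > 0" using cc_pos[OF L] .
  define X where "X = ksq L \<xi>"
  have X: "X > 0" unfolding X_def using ksq_pos[OF L False] .
  define g where "g \<eta> = (if \<eta> \<noteq> (0,0) \<and> ksq L \<eta> \<le> X / 4 then 4 / X else 0)" for \<eta>
  have g0: "g \<eta> \<ge> 0" for \<eta> using X by (simp add: g_def)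
  have pt: "(KA2 L \<alpha> \<xi> \<eta>)^2 \<le> g \<eta>" for \<eta>
  proof (cases "4 * ksq L \<eta> \<le> X \<and> \<eta> \<noteq> (0,0) \<and> sub \<xi> \<eta> \<noteq> (0,0)")
    case False
    then have "KA2 L \<alpha> \<xi> \<eta> = 0" by (auto simp: KA2_def KA_def X_def)
    then show ?thesis using g0 by simp
  next
    case nz: True
    define Y where "Y = ksq L \<eta>"
    define Z where "Z = ksq L (sub \<xi> \<eta>)"
    have Y: "Y > 0" unfolding Y_def using ksq_pos[OF L] nz by auto
    have Z: "Z > 0" unfolding Z_def using ksq_pos[OF L] nz by auto
    have XY: "4 * Y \<le> X" using nz by (simp add: Y_def)
    have K2: "(KA2 L \<alpha> \<xi> \<eta>)^2 = X powr (-1-\<alpha>) * (cr L (sub \<xi> \<eta>) \<eta>)^2 * Z powr (\<alpha>-2)"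
      using nz False by (simp add: KA2_def KA_sq X_def Z_def)
    have XZ: "X / 4 \<le> Z"
      by (rule region_big[of X Y Z]) (use X Y Z XY tri1[of L \<xi> \<eta>] in \<open>auto simp: X_def Y_def Z_def\<close>)
    have "(KA2 L \<alpha> \<xi> \<eta>)^2 \<le> 16 * Y * X powr (-2)"
      unfolding K2 by (rule kA_a) (use X Y Z a XZ cr2[of L \<xi> \<eta>] in \<open>auto simp: X_def Y_def Z_def\<close>)
    also have "\<dots> \<le> 4 / X"
    proof -
      have e: "X powr (-2) = 1 / X^2" using X by (simp add: powr_minus powr_realpow divide_inverse)
      show ?thesis unfolding e using X XY by (simp add: field_simps power2_eq_square)
    qed
    also have "\<dots> = g \<eta>" using nz XY by (simp add: g_def Y_def)
    finally show ?thesis .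
  qed
  have "(\<Sum>\<eta>\<in>G. (KA2 L \<alpha> \<xi> \<eta>)^2) \<le> (\<Sum>\<eta>\<in>G. g \<eta>)" by (rule sum_mono) (rule pt)
  also have "(\<Sum>\<eta>\<in>G. g \<eta>) = 4 / X * real (card {\<eta>\<in>G. \<eta> \<noteq> (0,0) \<and> ksq L \<eta> \<le> X / 4})"
    unfolding g_def by (rule sum_filter_const[OF G])
  also have "\<dots> \<le> 4 / X * (16 / cc L * (X / 4))"
    by (rule mult_left_mono[OF count_ball]) (use L X G in auto)
  also have "\<dots> = 16 / cc L" using X by (simp add: field_simps)
  finally show ?thesis .
qed

lemma HB1:
  assumes L: "L > 0" and a: "0 < \<alpha>" "\<alpha> < 1" and F: "finite F"
  shows "(\<Sum>\<xi>\<in>F. (KB1 L \<alpha> \<xi> \<eta>)^2) \<le> 1024 / ((1 - \<alpha>)^2 * (cc L)^2) + 576 / (cc L)^2"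
proof (cases "\<eta> = (0,0)")
  case True
  then have "KB1 L \<alpha> \<xi> \<eta> = 0" for \<xi> by (simp add: KB1_def KB_def)
  then show ?thesis using cc_pos[OF L] by simp
next
  case False
  have c: "cc L > 0" using cc_pos[OF L] .
  define Y where "Y = ksq L \<eta>"
  have Y: "Y > 0" unfolding Y_def using ksq_pos[OF L False] .
  have Yc: "Y \<ge> cc L" unfolding Y_def using ksq_ge[OF L False] .
  define f1 where "f1 \<xi> = (if \<xi> \<noteq> (0,0) \<and> ksq L \<xi> \<le> 4 * Y then 16 * Y powr (\<alpha> - 2) * ksq L \<xi> powr (- \<alpha>) else 0)" for \<xi>
  define g2 where "g2 \<zeta> = (if \<zeta> \<noteq> (0,0) then 4 * ksq L \<zeta> powr (- 2) else 0)" for \<zeta>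
  have f10: "f1 \<xi> \<ge> 0" for \<xi> by (simp add: f1_def)
  have g20: "g2 \<zeta> \<ge> 0" for \<zeta> by (simp add: g2_def)
  have pt: "(KB1 L \<alpha> \<xi> \<eta>)^2 \<le> f1 \<xi> + g2 (sub \<xi> \<eta>)" for \<xi>
  proof (cases "4 * Y \<le> ksq L \<xi> \<or> \<xi> = (0,0) \<or> sub \<xi> \<eta> = (0,0)")
    case True
    then have "KB1 L \<alpha> \<xi> \<eta> = 0" by (auto simp: KB1_def KB_def Y_def)
    then show ?thesis using f10 g20 by (simp add: add_nonneg_nonneg)
  next
    case nz: False
    define X where "X = ksq L \<xi>"
    define Z where "Z = ksq L (sub \<xi> \<eta>)"
    have X: "X > 0" unfolding X_def using ksq_pos[OF L] nz by auto
    have Z: "Z > 0" unfolding Z_def using ksq_pos[OF L] nz by auto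
    have XY: "X < 4 * Y" using nz by (simp add: X_def)
    have K2: "(KB1 L \<alpha> \<xi> \<eta>)^2 = X powr (-1-\<alpha>) * (cr L (sub \<xi> \<eta>) \<eta>)^2 * Z powr (-3) * Y powr \<alpha>"
      using nz False by (simp add: KB1_def KB_sq X_def Z_def Y_def)
    show ?thesis
    proof (cases "Y / 4 \<le> Z")
      case True
      have "(KB1 L \<alpha> \<xi> \<eta>)^2 \<le> 16 * X powr (-\<alpha>) * Y powr (\<alpha> - 2)"
        unfolding K2 by (rule kB_b) (use X Y Z a True cr3[of L \<xi> \<eta>] in \<open>auto simp: X_def Z_def\<close>)
      also have "\<dots> = f1 \<xi>" using nz XY by (simp add: f1_def X_def mult_ac)
      finally show ?thesis using g20 by (smt (verit))
    next
      case False
      have YX: "Y / 4 \<le> X"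
        by (rule region_big[of Y Z X]) (use X Y Z False tri2[of L \<eta> \<xi>] in \<open>auto simp: X_def Y_def Z_def\<close>)
      have "(KB1 L \<alpha> \<xi> \<eta>)^2 \<le> 4 * Z powr (-2)"
        unfolding K2 by (rule kB_c) (use X Y Z a YX cr3[of L \<xi> \<eta>] in \<open>auto simp: X_def Z_def\<close>)
      also have "\<dots> = g2 (sub \<xi> \<eta>)" using nz by (simp add: g2_def Z_def)
      finally show ?thesis using f10 by (smt (verit))
    qed
  qed
  have s1: "(\<Sum>\<xi>\<in>F. f1 \<xi>) \<le> 1024 / ((1 - \<alpha>)^2 * (cc L)^2)"
  proof -
    have "(\<Sum>\<xi>\<in>F. f1 \<xi>) = 16 * Y powr (\<alpha> - 2) * (\<Sum>\<xi>\<in>{\<xi>\<in>F. \<xi> \<noteq> (0,0) \<and> ksq L \<xi> \<le> 4 * Y}. ksq L \<xi> powr (- \<alpha>))"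
      unfolding f1_def by (rule sum_filter_cmult[OF F])
    also have "\<dots> \<le> 16 * Y powr (\<alpha> - 2) * (16 / (1 - \<alpha>)^2 / cc L * (4 * Y) powr (1 - \<alpha>))"
      by (rule mult_left_mono[OF wball]) (use L a Y F in auto)
    also have "\<dots> = 256 / (1 - \<alpha>)^2 / cc L * (Y powr (\<alpha> - 2) * (4 * Y) powr (1 - \<alpha>))" by (simp add: mult_ac)
    also have "Y powr (\<alpha> - 2) * (4 * Y) powr (1 - \<alpha>) = 4 powr (1 - \<alpha>) * (1 / Y)"
    proof -
      have "Y powr (\<alpha> - 2) * (4 * Y) powr (1 - \<alpha>) = 4 powr (1 - \<alpha>) * Y powr (\<alpha> - 2 + (1 - \<alpha>))"
        using pw[OF Y, of 4 "\<alpha> - 2" "1 - \<alpha>"] by simp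
      also have "Y powr (\<alpha> - 2 + (1 - \<alpha>)) = 1 / Y" using Y by (simp add: powr_minus divide_inverse)
      finally show ?thesis .
    qed
    also have "256 / (1 - \<alpha>)^2 / cc L * (4 powr (1 - \<alpha>) * (1 / Y)) \<le> 256 / (1 - \<alpha>)^2 / cc L * (4 * (1 / cc L))"
    proof (rule mult_left_mono)
      show "4 powr (1 - \<alpha>) * (1 / Y) \<le> 4 * (1 / cc L)"
        by (rule mult_mono) (use p4le[of "1 - \<alpha>" 1] a c Y Yc in \<open>auto simp: divide_simps\<close>)
    qed (use a c in auto)
    also have "\<dots> = 1024 / ((1 - \<alpha>)^2 * (cc L)^2)" by (simp add: field_simps power2_eq_square)
    finally show ?thesis .
  qed
  have s2: "(\<Sum>\<xi>\<in>F. g2 (sub \<xi> \<eta>)) \<le> 576 / (cc L)^2"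
  proof -
    have "(\<Sum>\<xi>\<in>F. g2 (sub \<xi> \<eta>)) = (\<Sum>\<zeta>\<in>(\<lambda>\<xi>. sub \<xi> \<eta>) ` F. g2 \<zeta>)" by (rule sum_reindex_sub)
    also have "\<dots> = 4 * (\<Sum>\<zeta>\<in>{\<zeta>\<in>(\<lambda>\<xi>. sub \<xi> \<eta>) ` F. \<zeta> \<noteq> (0,0)}. ksq L \<zeta> powr (- 2))"
      unfolding g2_def by (rule sum_filter_cmult) (use F in auto)
    also have "\<dots> \<le> 4 * (144 / (cc L)^2)"
      by (rule mult_left_mono[OF wtot]) (use L F in auto)
    also have "\<dots> = 576 / (cc L)^2" by simp
    finally show ?thesis .
  qed
  have "(\<Sum>\<xi>\<in>F. (KB1 L \<alpha> \<xi> \<eta>)^2) \<le> (\<Sum>\<xi>\<in>F. f1 \<xi> + g2 (sub \<xi> \<eta>))" by (rule sum_mono) (rule pt)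
  also have "\<dots> = (\<Sum>\<xi>\<in>F. f1 \<xi>) + (\<Sum>\<xi>\<in>F. g2 (sub \<xi> \<eta>))" by (rule sum.distrib)
  finally show ?thesis using s1 s2 by linarith
qed

lemma HB2:
  assumes L: "L > 0" and a: "0 < \<alpha>" "\<alpha> < 1" and G: "finite G"
  shows "(\<Sum>\<eta>\<in>G. (KB2 L \<alpha> \<xi> \<eta>)^2) \<le> 256 / (cc L)^2"
proof (cases "\<xi> = (0,0)")
  case True
  then have "KB2 L \<alpha> \<xi> \<eta> = 0" for \<eta> by (simp add: KB2_def KB_def)
  then show ?thesis using cc_pos[OF L] by simp
next
  case False
  have c: "cc L > 0" using cc_pos[OF L] .
  define X where "X = ksq L \<xi>"
  have X: "X > 0" unfolding X_def using ksq_pos[OF L False] .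
  have Xc: "X \<ge> cc L" unfolding X_def using ksq_ge[OF L False] .
  define g where "g \<eta> = (if \<eta> \<noteq> (0,0) \<and> ksq L \<eta> \<le> X / 4 then 64 * X powr (-2) else 0)" for \<eta>
  have g0: "g \<eta> \<ge> 0" for \<eta> using X by (simp add: g_def)
  have pt: "(KB2 L \<alpha> \<xi> \<eta>)^2 \<le> g \<eta>" for \<eta>
  proof (cases "4 * ksq L \<eta> \<le> X \<and> \<eta> \<noteq> (0,0) \<and> sub \<xi> \<eta> \<noteq> (0,0)")
    case False
    then have "KB2 L \<alpha> \<xi> \<eta> = 0" by (auto simp: KB2_def KB_def X_def)
    then show ?thesis using g0 by simp
  next
    case nz: True
    define Y where "Y = ksq L \<eta>"
    define Z where "Z = ksq L (sub \<xi> \<eta>)"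
    have Y: "Y > 0" unfolding Y_def using ksq_pos[OF L] nz by auto
    have Z: "Z > 0" unfolding Z_def using ksq_pos[OF L] nz by auto
    have XY: "4 * Y \<le> X" using nz by (simp add: Y_def)
    have K2: "(KB2 L \<alpha> \<xi> \<eta>)^2 = X powr (-1-\<alpha>) * (cr L (sub \<xi> \<eta>) \<eta>)^2 * Z powr (-3) * Y powr \<alpha>"
      using nz False by (simp add: KB2_def KB_sq X_def Z_def Y_def)
    have XZ: "X / 4 \<le> Z"
      by (rule region_big[of X Y Z]) (use X Y Z XY tri1[of L \<xi> \<eta>] in \<open>auto simp: X_def Y_def Z_def\<close>)
    have "(KB2 L \<alpha> \<xi> \<eta>)^2 \<le> 64 * X powr (-3-\<alpha>) * Y powr (1 + \<alpha>)"
      unfolding K2 by (rule kB_a) (use X Y Z a XZ cr2[of L \<xi> \<eta>] in \<open>auto simp: X_def Y_def Z_def\<close>)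
    also have "\<dots> \<le> 64 * X powr (-3-\<alpha>) * X powr (1 + \<alpha>)"
    proof (rule mult_left_mono)
      show "Y powr (1 + \<alpha>) \<le> X powr (1 + \<alpha>)" by (rule powr_mono2) (use Y X XY a in auto)
    qed simp
    also have "\<dots> = 64 * X powr (-2)" by (simp add: mult.assoc powr_add[symmetric])
    also have "\<dots> = g \<eta>" using nz XY by (simp add: g_def Y_def)
    finally show ?thesis .
  qed
  have "(\<Sum>\<eta>\<in>G. (KB2 L \<alpha> \<xi> \<eta>)^2) \<le> (\<Sum>\<eta>\<in>G. g \<eta>)" by (rule sum_mono) (rule pt)
  also have "(\<Sum>\<eta>\<in>G. g \<eta>) = 64 * X powr (-2) * real (card {\<eta>\<in>G. \<eta> \<noteq> (0,0) \<and> ksq L \<eta> \<le> X / 4})"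
    unfolding g_def by (rule sum_filter_const[OF G])
  also have "\<dots> \<le> 64 * X powr (-2) * (16 / cc L * (X / 4))"
    by (rule mult_left_mono[OF count_ball]) (use L X G in auto)
  also have "\<dots> = 256 / cc L * (1 / X)"
  proof -
    have e: "X powr (-2) = 1 / X^2" using X by (simp add: powr_minus powr_realpow divide_inverse)
    show ?thesis unfolding e using X by (simp add: field_simps power2_eq_square)
  qed
  also have "\<dots> \<le> 256 / cc L * (1 / cc L)"
    by (rule mult_left_mono) (use X Xc c in \<open>auto simp: divide_simps\<close>)
  also have "\<dots> = 256 / (cc L)^2" by (simp add: power2_eq_square)
  finally show ?thesis .
qed

lemma jac_eq: "jac L \<psi> q \<xi> = infsum (\<lambda>\<eta>. of_real (cr L (sub \<xi> \<eta>) \<eta>) * \<psi> (sub \<xi> \<eta>) * q \<eta>) UNIV"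
proof -
  have "(let \<zeta> = (fst \<xi> - fst \<eta>, snd \<xi> - snd \<eta>) in
       ((- \<i> * of_real (ky L \<zeta>)) * \<psi> \<zeta>) * ((\<i> * of_real (kx L \<eta>)) * q \<eta>)
     + ((\<i> * of_real (kx L \<zeta>)) * \<psi> \<zeta>) * ((\<i> * of_real (ky L \<eta>)) * q \<eta>))
     = of_real (cr L (sub \<xi> \<eta>) \<eta>) * \<psi> (sub \<xi> \<eta>) * q \<eta>" for \<eta>
    by (simp add: Let_def sub_def[symmetric] cr_def algebra_simps)
  then show ?thesis unfolding jac_def by simp
qed

lemma cr_zero: "cr L (sub (0,0) \<eta>) \<eta> = 0"
  by (simp add: cr_def sub_def kx_def ky_def)

lemma jac_zero: "jac L \<psi> q (0,0) = 0"
  unfolding jac_eq cr_zero by simp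

definition neg :: "int \<times> int \<Rightarrow> int \<times> int" where "neg \<xi> = (- fst \<xi>, - snd \<xi>)"

definition csym :: "sfield \<Rightarrow> bool" where "csym c \<longleftrightarrow> (\<forall>a b. c (-a, -b) = cnj (c (a, b)))"

lemma csym_neg: "csym c \<Longrightarrow> c (neg \<xi>) = cnj (c \<xi>)"
  by (cases \<xi>) (simp add: csym_def neg_def)

lemma kx_neg: "kx L (neg \<xi>) = - kx L \<xi>" by (simp add: kx_def neg_def)
lemma ky_neg: "ky L (neg \<xi>) = - ky L \<xi>" by (simp add: ky_def neg_def)
lemma ksq_neg: "ksq L (neg \<xi>) = ksq L \<xi>" by (simp add: ksq_def kx_neg ky_neg)
lemma sub_neg: "sub (neg \<xi>) (neg \<eta>) = neg (sub \<xi> \<eta>)" by (simp add: sub_def neg_def)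
lemma neg_zero_iff: "neg \<xi> = (0,0) \<longleftrightarrow> \<xi> = (0,0)" by (cases \<xi>) (auto simp: neg_def)
lemma cr_neg: "cr L (neg \<zeta>) (neg \<eta>) = cr L \<zeta> \<eta>" by (simp add: cr_def kx_neg ky_neg)
lemma bij_neg: "bij_betw neg UNIV UNIV"
  by (rule bij_betwI[where g=neg]) (auto simp: neg_def)

lemma jac_cnj:
  assumes "csym \<psi>" "csym q"
  shows "jac L \<psi> q (neg \<xi>) = cnj (jac L \<psi> q \<xi>)"
proof -
  have "jac L \<psi> q (neg \<xi>) = infsum (\<lambda>\<eta>. of_real (cr L (sub (neg \<xi>) (neg \<eta>)) (neg \<eta>)) * \<psi> (sub (neg \<xi>) (neg \<eta>)) * q (neg \<eta>)) UNIV"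
    unfolding jac_eq by (rule infsum_reindex_bij_betw[OF bij_neg, symmetric])
  also have "\<dots> = infsum (\<lambda>\<eta>. cnj (of_real (cr L (sub \<xi> \<eta>) \<eta>) * \<psi> (sub \<xi> \<eta>) * q \<eta>)) UNIV"
    by (rule infsum_cong) (simp add: sub_neg cr_neg csym_neg[OF assms(1)] csym_neg[OF assms(2)] neg_def[symmetric])
  also have "\<dots> = cnj (jac L \<psi> q \<xi>)" unfolding jac_eq by (rule infsum_cnj)
  finally show ?thesis .
qed

lemma symdet_eq: "symdet L S1 S2 \<xi> = ksq L \<xi> * (ksq L \<xi> + S1 + S2)"
  by (simp add: symdet_def algebra_simps)

lemma invop_bound:
  assumes L: "L > 0" and S: "S1 > 0" "S2 > 0" and z: "\<zeta> \<noteq> (0,0)"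
  shows "cmod (fst (invop L S1 S2 q) \<zeta>) \<le> (cmod (fst q \<zeta>) + cmod (snd q \<zeta>)) / ksq L \<zeta>"
    and "cmod (snd (invop L S1 S2 q) \<zeta>) \<le> (cmod (fst q \<zeta>) + cmod (snd q \<zeta>)) / ksq L \<zeta>"
proof -
  define w where "w = ksq L \<zeta>"
  have w: "w > 0" unfolding w_def using ksq_pos[OF L z] .
  have det: "symdet L S1 S2 \<zeta> = w * (w + S1 + S2)" unfolding w_def by (rule symdet_eq)
  have dpos: "w * (w + S1 + S2) > 0" using w S by simp
  have gen: "cmod ((of_real A * x + of_real B * y) / of_real (w * (w + S1 + S2))) \<le> (cmod x + cmod y) / w"
    if AB: "0 \<le> A" "A \<le> w + S1 + S2" "0 \<le> B" "B \<le> w + S1 + S2" for A B :: real and x y :: complex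
  proof -
    have "cmod (of_real A * x + of_real B * y) \<le> A * cmod x + B * cmod y"
      using norm_triangle_ineq[of "of_real A * x" "of_real B * y"] AB by (simp add: norm_mult)
    also have "\<dots> \<le> (w + S1 + S2) * cmod x + (w + S1 + S2) * cmod y"
      using AB by (intro add_mono mult_right_mono) auto
    finally have n: "cmod (of_real A * x + of_real B * y) \<le> (w + S1 + S2) * (cmod x + cmod y)"
      by (simp add: algebra_simps)
    have nd: "cmod (complex_of_real (w * (w + S1 + S2))) = w * (w + S1 + S2)"
      using dpos by (simp only: norm_of_real abs_of_pos)
    have "cmod ((of_real A * x + of_real B * y) / of_real (w * (w + S1 + S2)))
        = cmod (of_real A * x + of_real B * y) / (w * (w + S1 + S2))"
      by (simp only: norm_divide nd)
    also have "\<dots> \<le> (w + S1 + S2) * (cmod x + cmod y) / (w * (w + S1 + S2))"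
      by (rule divide_right_mono[OF n]) (use dpos in simp)
    also have "\<dots> = (cmod x + cmod y) / w"
    proof -
      have Kp: "w + S1 + S2 \<noteq> 0" using w S by simp
      show ?thesis using mult_divide_mult_cancel_left[OF Kp, of "cmod x + cmod y" w]
        by (simp only: mult.commute)
    qed
    finally show ?thesis .
  qed
  show "cmod (fst (invop L S1 S2 q) \<zeta>) \<le> (cmod (fst q \<zeta>) + cmod (snd q \<zeta>)) / ksq L \<zeta>"
    using gen[of "w + S2" S1 "fst q \<zeta>" "snd q \<zeta>"] z S w unfolding w_def
    by (simp add: invop_def symdet_eq)
  show "cmod (snd (invop L S1 S2 q) \<zeta>) \<le> (cmod (fst q \<zeta>) + cmod (snd q \<zeta>)) / ksq L \<zeta>"
    using gen[of S2 "w + S1" "fst q \<zeta>" "snd q \<zeta>"] z S w unfolding w_def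
    by (simp add: invop_def symdet_eq)
qed

lemma invop_zero: "fst (invop L S1 S2 q) (0,0) = 0" "snd (invop L S1 S2 q) (0,0) = 0"
  by (simp_all add: invop_def)

lemma lin_aux: "(A * x + B * y) / D - (A * x' + B * y') / D = (A * (x - x') + B * (y - y')) / (D::complex)"
proof -
  have "(A * x + B * y) / D - (A * x' + B * y') / D = ((A * x + B * y) - (A * x' + B * y')) / D"
    by (rule diff_divide_distrib[symmetric])
  also have "(A * x + B * y) - (A * x' + B * y') = A * (x - x') + B * (y - y')" by (simp add: algebra_simps)
  finally show ?thesis .
qed

lemma invop_lin:
  "fst (invop L S1 S2 q) \<zeta> - fst (invop L S1 S2 p) \<zeta> = fst (invop L S1 S2 (vdiff q p)) \<zeta>"
  "snd (invop L S1 S2 q) \<zeta> - snd (invop L S1 S2 p) \<zeta> = snd (invop L S1 S2 (vdiff q p)) \<zeta>"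
  by (simp_all add: invop_def vdiff_def lin_aux)

lemma invop_csym:
  assumes "csym (fst q)" "csym (snd q)"
  shows "csym (fst (invop L S1 S2 q))" "csym (snd (invop L S1 S2 q))"
proof -
  have k: "ksq L (-a, -b) = ksq L (a, b)" for a b using ksq_neg[of L "(a,b)"] by (simp add: neg_def)
  have d: "symdet L S1 S2 (-a, -b) = symdet L S1 S2 (a, b)" for a b by (simp add: symdet_def k)
  show "csym (fst (invop L S1 S2 q))" using assms unfolding csym_def
    by (auto simp: invop_def k d)
  show "csym (snd (invop L S1 S2 q))" using assms unfolding csym_def
    by (auto simp: invop_def k d)
qed

definition "MA L \<alpha> = (256 / ((1 - \<alpha>)^2 * cc L) + 64 / (\<alpha>^2 * cc L)) + 16 / cc L"
definition "MB L \<alpha> = (1024 / ((1 - \<alpha>)^2 * (cc L)^2) + 576 / (cc L)^2) + 256 / (cc L)^2"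

lemma schurA:
  fixes u v :: "int \<times> int \<Rightarrow> real"
  assumes L: "L > 0" and a: "0 < \<alpha>" "\<alpha> < 1"
    and u0: "\<And>\<zeta>. u \<zeta> \<ge> 0" and v0: "\<And>\<zeta>. v \<zeta> \<ge> 0"
    and us: "(\<lambda>\<zeta>. (u \<zeta>)^2) summable_on UNIV" and vs: "(\<lambda>\<zeta>. (v \<zeta>)^2) summable_on UNIV"
  shows "\<And>\<xi>. (\<lambda>\<eta>. KA L \<alpha> \<xi> \<eta> * u (sub \<xi> \<eta>) * v \<eta>) summable_on UNIV"
    and "(\<lambda>\<xi>. (infsum (\<lambda>\<eta>. KA L \<alpha> \<xi> \<eta> * u (sub \<xi> \<eta>) * v \<eta>) UNIV)^2) summable_on UNIV"
    and "infsum (\<lambda>\<xi>. (infsum (\<lambda>\<eta>. KA L \<alpha> \<xi> \<eta> * u (sub \<xi> \<eta>) * v \<eta>) UNIV)^2) UNIV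
          \<le> 2 * MA L \<alpha> * infsum (\<lambda>\<zeta>. (u \<zeta>)^2) UNIV * infsum (\<lambda>\<zeta>. (v \<zeta>)^2) UNIV"
  using schur[of u v "KA1 L \<alpha>" "KA2 L \<alpha>" "256 / ((1 - \<alpha>)^2 * cc L) + 64 / (\<alpha>^2 * cc L)" "16 / cc L",
      OF u0 v0 _ _ us vs HA1[OF L a] HA2[OF L a]]
  unfolding KA12 MA_def by (auto simp: KA1_def KA2_def KA_nonneg)

lemma schurB:
  fixes u v :: "int \<times> int \<Rightarrow> real"
  assumes L: "L > 0" and a: "0 < \<alpha>" "\<alpha> < 1"
    and u0: "\<And>\<zeta>. u \<zeta> \<ge> 0" and v0: "\<And>\<zeta>. v \<zeta> \<ge> 0"
    and us: "(\<lambda>\<zeta>. (u \<zeta>)^2) summable_on UNIV" and vs: "(\<lambda>\<zeta>. (v \<zeta>)^2) summable_on UNIV"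
  shows "\<And>\<xi>. (\<lambda>\<eta>. KB L \<alpha> \<xi> \<eta> * u (sub \<xi> \<eta>) * v \<eta>) summable_on UNIV"
    and "(\<lambda>\<xi>. (infsum (\<lambda>\<eta>. KB L \<alpha> \<xi> \<eta> * u (sub \<xi> \<eta>) * v \<eta>) UNIV)^2) summable_on UNIV"
    and "infsum (\<lambda>\<xi>. (infsum (\<lambda>\<eta>. KB L \<alpha> \<xi> \<eta> * u (sub \<xi> \<eta>) * v \<eta>) UNIV)^2) UNIV
          \<le> 2 * MB L \<alpha> * infsum (\<lambda>\<zeta>. (u \<zeta>)^2) UNIV * infsum (\<lambda>\<zeta>. (v \<zeta>)^2) UNIV"
  using schur[of u v "KB1 L \<alpha>" "KB2 L \<alpha>" "1024 / ((1 - \<alpha>)^2 * (cc L)^2) + 576 / (cc L)^2" "256 / (cc L)^2",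
      OF u0 v0 _ _ us vs HB1[OF L a] HB2[OF L a]]
  unfolding KB12 MB_def by (auto simp: KB1_def KB2_def KB_nonneg)

lemma sqrt_pow_inv: "(Z::real) > 0 \<Longrightarrow> sqrt (Z powr (-2)) = 1 / Z"
proof -
  assume Z: "Z > 0"
  have "Z powr (-2) = (1 / Z)^2" using Z by (simp add: powr_minus powr_numeral power_one_over divide_inverse power_inverse)
  then show ?thesis using Z by simp
qed

lemma ptA:
  fixes \<psi> v :: sfield and A :: "int \<times> int \<Rightarrow> real"
  assumes L: "L > 0" and x: "\<xi> \<noteq> (0,0)" and A0: "\<And>\<zeta>. A \<zeta> \<ge> 0"
    and hb: "\<And>\<zeta>. \<zeta> \<noteq> (0,0) \<Longrightarrow> cmod (\<psi> \<zeta>) \<le> A \<zeta> / ksq L \<zeta>"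
    and p0: "\<psi> (0,0) = 0" and v0: "v (0,0) = 0"
  shows "sqrt (ksq L \<xi> powr (-1-\<alpha>)) * (\<bar>cr L (sub \<xi> \<eta>) \<eta>\<bar> * cmod (\<psi> (sub \<xi> \<eta>)) * cmod (v \<eta>))
     \<le> KA L \<alpha> \<xi> \<eta> * (sqrt (ksq L (sub \<xi> \<eta>) powr (-\<alpha>)) * A (sub \<xi> \<eta>)) * cmod (v \<eta>)"
proof (cases "\<eta> = (0,0) \<or> sub \<xi> \<eta> = (0,0)")
  case True
  then show ?thesis using p0 v0 A0 KA_nonneg[of L \<alpha> \<xi> \<eta>] by (auto intro!: mult_nonneg_nonneg)
next
  case False
  define X where "X = ksq L \<xi>"
  define Z where "Z = ksq L (sub \<xi> \<eta>)"
  define c where "c = cr L (sub \<xi> \<eta>) \<eta>"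
  have X: "X > 0" unfolding X_def using ksq_pos[OF L x] .
  have Z: "Z > 0" unfolding Z_def using ksq_pos[OF L] False by auto
  have K: "KA L \<alpha> \<xi> \<eta> = sqrt (X powr (-1-\<alpha>)) * \<bar>c\<bar> * sqrt (Z powr (\<alpha>-2))"
    using False x by (simp add: KA_def X_def Z_def c_def real_sqrt_mult)
  have zz: "sqrt (Z powr (\<alpha>-2)) * sqrt (Z powr (-\<alpha>)) = 1 / Z"
  proof -
    have "sqrt (Z powr (\<alpha>-2)) * sqrt (Z powr (-\<alpha>)) = sqrt (Z powr (-2))"
      by (simp add: real_sqrt_mult[symmetric] powr_add[symmetric])
    then show ?thesis using sqrt_pow_inv[OF Z] by simp
  qed
  have "cmod (\<psi> (sub \<xi> \<eta>)) \<le> A (sub \<xi> \<eta>) / Z" using hb False by (simp add: Z_def)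
  then have "sqrt (X powr (-1-\<alpha>)) * (\<bar>c\<bar> * cmod (\<psi> (sub \<xi> \<eta>)) * cmod (v \<eta>))
      \<le> sqrt (X powr (-1-\<alpha>)) * (\<bar>c\<bar> * (A (sub \<xi> \<eta>) / Z) * cmod (v \<eta>))"
    by (intro mult_left_mono mult_right_mono) auto
  also have "\<dots> = sqrt (X powr (-1-\<alpha>)) * \<bar>c\<bar> * (sqrt (Z powr (\<alpha>-2)) * sqrt (Z powr (-\<alpha>))) * A (sub \<xi> \<eta>) * cmod (v \<eta>)"
    unfolding zz by simp
  also have "\<dots> = KA L \<alpha> \<xi> \<eta> * (sqrt (Z powr (-\<alpha>)) * A (sub \<xi> \<eta>)) * cmod (v \<eta>)"
    unfolding K by (simp add: mult_ac)
  finally show ?thesis by (simp add: X_def Z_def c_def)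
qed

lemma ptB:
  fixes \<psi> v :: sfield and A :: "int \<times> int \<Rightarrow> real"
  assumes L: "L > 0" and x: "\<xi> \<noteq> (0,0)" and A0: "\<And>\<zeta>. A \<zeta> \<ge> 0"
    and hb: "\<And>\<zeta>. \<zeta> \<noteq> (0,0) \<Longrightarrow> cmod (\<psi> \<zeta>) \<le> A \<zeta> / ksq L \<zeta>"
    and p0: "\<psi> (0,0) = 0" and v0: "v (0,0) = 0"
  shows "sqrt (ksq L \<xi> powr (-1-\<alpha>)) * (\<bar>cr L (sub \<xi> \<eta>) \<eta>\<bar> * cmod (\<psi> (sub \<xi> \<eta>)) * cmod (v \<eta>))
     \<le> KB L \<alpha> \<xi> \<eta> * (sqrt (ksq L (sub \<xi> \<eta>)) * A (sub \<xi> \<eta>)) * (sqrt (ksq L \<eta> powr (-\<alpha>)) * cmod (v \<eta>))"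
proof (cases "\<eta> = (0,0) \<or> sub \<xi> \<eta> = (0,0)")
  case True
  then show ?thesis using p0 v0 A0 KB_nonneg[of L \<alpha> \<xi> \<eta>] by (auto intro!: mult_nonneg_nonneg simp: ksq_nonneg)
next
  case False
  define X where "X = ksq L \<xi>"
  define Y where "Y = ksq L \<eta>"
  define Z where "Z = ksq L (sub \<xi> \<eta>)"
  define c where "c = cr L (sub \<xi> \<eta>) \<eta>"
  have X: "X > 0" unfolding X_def using ksq_pos[OF L x] .
  have Y: "Y > 0" unfolding Y_def using ksq_pos[OF L] False by auto
  have Z: "Z > 0" unfolding Z_def using ksq_pos[OF L] False by auto
  have K: "KB L \<alpha> \<xi> \<eta> = sqrt (X powr (-1-\<alpha>)) * \<bar>c\<bar> * sqrt (Z powr (-3)) * sqrt (Y powr \<alpha>)"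
    using False x by (simp add: KB_def X_def Y_def Z_def c_def real_sqrt_mult)
  have zz: "sqrt (Z powr (-3)) * sqrt Z = 1 / Z"
  proof -
    have "sqrt (Z powr (-3)) * sqrt Z = sqrt (Z powr (-3) * Z)" by (simp add: real_sqrt_mult)
    also have "Z powr (-3) * Z = Z powr (-2)" using pxm[OF Z, of "-3"] by simp
    finally show ?thesis using sqrt_pow_inv[OF Z] by simp
  qed
  have yy: "sqrt (Y powr \<alpha>) * sqrt (Y powr (-\<alpha>)) = 1"
    using Y by (simp add: real_sqrt_mult[symmetric] powr_add[symmetric])
  have "cmod (\<psi> (sub \<xi> \<eta>)) \<le> A (sub \<xi> \<eta>) / Z" using hb False by (simp add: Z_def)
  then have "sqrt (X powr (-1-\<alpha>)) * (\<bar>c\<bar> * cmod (\<psi> (sub \<xi> \<eta>)) * cmod (v \<eta>))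
      \<le> sqrt (X powr (-1-\<alpha>)) * (\<bar>c\<bar> * (A (sub \<xi> \<eta>) / Z) * cmod (v \<eta>))"
    by (intro mult_left_mono mult_right_mono) auto
  also have "\<dots> = sqrt (X powr (-1-\<alpha>)) * \<bar>c\<bar> * (sqrt (Z powr (-3)) * sqrt Z) * (sqrt (Y powr \<alpha>) * sqrt (Y powr (-\<alpha>))) * A (sub \<xi> \<eta>) * cmod (v \<eta>)"
    unfolding zz yy by simp
  also have "\<dots> = KB L \<alpha> \<xi> \<eta> * (sqrt Z * A (sub \<xi> \<eta>)) * (sqrt (Y powr (-\<alpha>)) * cmod (v \<eta>))"
    unfolding K by (simp add: mult_ac)
  finally show ?thesis by (simp add: X_def Y_def Z_def c_def)
qed

lemma sq_sum_le: "(x::real) \<ge> 0 \<Longrightarrow> a \<ge> 0 \<Longrightarrow> b \<ge> 0 \<Longrightarrow> x \<le> a + b \<Longrightarrow> x^2 \<le> 2 * a^2 + 2 * b^2"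
proof -
  assume h: "x \<ge> 0" "a \<ge> 0" "b \<ge> 0" "x \<le> a + b"
  have "x^2 \<le> (a + b)^2" using h by (intro power_mono) auto
  also have "\<dots> \<le> 2 * a^2 + 2 * b^2"
  proof -
    have "0 \<le> (a - b)^2" by simp
    then show ?thesis by (simp add: power2_eq_square algebra_simps)
  qed
  finally show ?thesis .
qed

lemma comp_est:
  fixes \<psi> \<psi>b \<psi>d q qb d :: sfield and Aq Ab Ad :: "int \<times> int \<Rightarrow> real"
  assumes L: "L > 0" and a: "0 < \<alpha>" "\<alpha> < 1"
    and Aq0: "\<And>\<zeta>. Aq \<zeta> \<ge> 0" and Ab0: "\<And>\<zeta>. Ab \<zeta> \<ge> 0" and Ad0: "\<And>\<zeta>. Ad \<zeta> \<ge> 0"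
    and hq: "\<And>\<zeta>. \<zeta> \<noteq> (0,0) \<Longrightarrow> cmod (\<psi> \<zeta>) \<le> Aq \<zeta> / ksq L \<zeta>"
    and hb: "\<And>\<zeta>. \<zeta> \<noteq> (0,0) \<Longrightarrow> cmod (\<psi>b \<zeta>) \<le> Ab \<zeta> / ksq L \<zeta>"
    and hd: "\<And>\<zeta>. \<zeta> \<noteq> (0,0) \<Longrightarrow> cmod (\<psi>d \<zeta>) \<le> Ad \<zeta> / ksq L \<zeta>"
    and p0: "\<psi> (0,0) = 0" "\<psi>b (0,0) = 0" "\<psi>d (0,0) = 0"
    and q0: "q (0,0) = 0" "qb (0,0) = 0" "d (0,0) = 0"
    and lin: "\<And>\<zeta>. \<psi> \<zeta> - \<psi>b \<zeta> = \<psi>d \<zeta>" and dq: "\<And>\<eta>. d \<eta> = q \<eta> - qb \<eta>"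
    and sAq: "(\<lambda>\<zeta>. (sqrt (ksq L \<zeta> powr (-\<alpha>)) * Aq \<zeta>)^2) summable_on UNIV"
    and sAb': "(\<lambda>\<zeta>. (sqrt (ksq L \<zeta> powr (-\<alpha>)) * Ab \<zeta>)^2) summable_on UNIV"
    and sAd: "(\<lambda>\<zeta>. (sqrt (ksq L \<zeta> powr (-\<alpha>)) * Ad \<zeta>)^2) summable_on UNIV"
    and sAb: "(\<lambda>\<zeta>. (sqrt (ksq L \<zeta>) * Ab \<zeta>)^2) summable_on UNIV"
    and sq: "(\<lambda>\<eta>. (cmod (q \<eta>))^2) summable_on UNIV"
    and sqb: "(\<lambda>\<eta>. (cmod (qb \<eta>))^2) summable_on UNIV"
    and sd: "(\<lambda>\<eta>. (sqrt (ksq L \<eta> powr (-\<alpha>)) * cmod (d \<eta>))^2) summable_on UNIV"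
  shows "(\<lambda>\<xi>. ksq L \<xi> powr (-1-\<alpha>) * (cmod (jac L \<psi> q \<xi> - jac L \<psi>b qb \<xi>))^2) summable_on (UNIV - {(0,0)})"
    and "infsum (\<lambda>\<xi>. ksq L \<xi> powr (-1-\<alpha>) * (cmod (jac L \<psi> q \<xi> - jac L \<psi>b qb \<xi>))^2) (UNIV - {(0,0)})
      \<le> 4 * MA L \<alpha> * infsum (\<lambda>\<zeta>. (sqrt (ksq L \<zeta> powr (-\<alpha>)) * Ad \<zeta>)^2) UNIV * infsum (\<lambda>\<eta>. (cmod (q \<eta>))^2) UNIV
       + 4 * MB L \<alpha> * infsum (\<lambda>\<zeta>. (sqrt (ksq L \<zeta>) * Ab \<zeta>)^2) UNIV * infsum (\<lambda>\<eta>. (sqrt (ksq L \<eta> powr (-\<alpha>)) * cmod (d \<eta>))^2) UNIV"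
proof -
  define uA where "uA \<zeta> = sqrt (ksq L \<zeta> powr (-\<alpha>)) * Ad \<zeta>" for \<zeta>
  define vA where "vA \<eta> = cmod (q \<eta>)" for \<eta>
  define uB where "uB \<zeta> = sqrt (ksq L \<zeta>) * Ab \<zeta>" for \<zeta>
  define vB where "vB \<eta> = sqrt (ksq L \<eta> powr (-\<alpha>)) * cmod (d \<eta>)" for \<eta>
  define uq where "uq \<zeta> = sqrt (ksq L \<zeta> powr (-\<alpha>)) * Aq \<zeta>" for \<zeta>
  define ub where "ub \<zeta> = sqrt (ksq L \<zeta> powr (-\<alpha>)) * Ab \<zeta>" for \<zeta>
  define vb where "vb \<eta> = cmod (qb \<eta>)" for \<eta>
  define TA where "TA \<xi> = infsum (\<lambda>\<eta>. KA L \<alpha> \<xi> \<eta> * uA (sub \<xi> \<eta>) * vA \<eta>) UNIV" for \<xi>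
  define TB where "TB \<xi> = infsum (\<lambda>\<eta>. KB L \<alpha> \<xi> \<eta> * uB (sub \<xi> \<eta>) * vB \<eta>) UNIV" for \<xi>
  have uA0: "uA \<zeta> \<ge> 0" for \<zeta> using Ad0 by (simp add: uA_def)
  have uB0: "uB \<zeta> \<ge> 0" for \<zeta> using Ab0 by (simp add: uB_def ksq_nonneg)
  have uq0: "uq \<zeta> \<ge> 0" for \<zeta> using Aq0 by (simp add: uq_def)
  have ub0: "ub \<zeta> \<ge> 0" for \<zeta> using Ab0 by (simp add: ub_def)
  have vA0: "vA \<zeta> \<ge> 0" for \<zeta> by (simp add: vA_def)
  have vB0: "vB \<zeta> \<ge> 0" for \<zeta> by (simp add: vB_def)
  have vb0: "vb \<zeta> \<ge> 0" for \<zeta> by (simp add: vb_def)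
  note SA = schurA[OF L a, of uA vA, OF uA0 vA0 sAd[folded uA_def] sq[folded vA_def]]
  note SB = schurB[OF L a, of uB vB, OF uB0 vB0 sAb[folded uB_def] sd[folded vB_def]]
  note SQ = schurA(1)[OF L a, of uq vA, OF uq0 vA0 sAq[folded uq_def] sq[folded vA_def]]
  note SQb = schurA(1)[OF L a, of ub vb, OF ub0 vb0 sAb'[folded ub_def] sqb[folded vb_def]]
  have TA0: "TA \<xi> \<ge> 0" for \<xi> unfolding TA_def
    by (rule infsum_nonneg) (simp add: KA_nonneg uA0 vA0)
  have TB0: "TB \<xi> \<ge> 0" for \<xi> unfolding TB_def
    by (rule infsum_nonneg) (simp add: KB_nonneg uB0 vB0)
  define W where "W \<xi> = sqrt (ksq L \<xi> powr (-1-\<alpha>))" for \<xi>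
  have key: "(W \<xi> * cmod (jac L \<psi> q \<xi> - jac L \<psi>b qb \<xi>))^2 \<le> 2 * (TA \<xi>)^2 + 2 * (TB \<xi>)^2"
    if x: "\<xi> \<noteq> (0,0)" for \<xi>
  proof -
    have Wp: "W \<xi> > 0" unfolding W_def using ksq_pos[OF L x] by simp
    define c where "c \<eta> = cr L (sub \<xi> \<eta>) \<eta>" for \<eta>
    define F where "F \<eta> = complex_of_real (c \<eta>) * \<psi> (sub \<xi> \<eta>) * q \<eta>" for \<eta>
    define Fb where "Fb \<eta> = complex_of_real (c \<eta>) * \<psi>b (sub \<xi> \<eta>) * qb \<eta>" for \<eta>
    define mA where "mA \<eta> = \<bar>c \<eta>\<bar> * cmod (\<psi>d (sub \<xi> \<eta>)) * cmod (q \<eta>)" for \<eta>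
    define mB where "mB \<eta> = \<bar>c \<eta>\<bar> * cmod (\<psi>b (sub \<xi> \<eta>)) * cmod (d \<eta>)" for \<eta>
    have mA0: "mA \<eta> \<ge> 0" for \<eta> by (simp add: mA_def)
    have mB0: "mB \<eta> \<ge> 0" for \<eta> by (simp add: mB_def)
    have j1: "jac L \<psi> q \<xi> = infsum F UNIV" unfolding jac_eq F_def c_def ..
    have j2: "jac L \<psi>b qb \<xi> = infsum Fb UNIV" unfolding jac_eq Fb_def c_def ..
    have WmA: "W \<xi> * mA \<eta> \<le> KA L \<alpha> \<xi> \<eta> * uA (sub \<xi> \<eta>) * vA \<eta>" for \<eta>
      unfolding W_def mA_def c_def uA_def vA_def by (rule ptA[where A=Ad and \<psi>=\<psi>d and v=q, OF L x Ad0 hd p0(3) q0(1)])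
    have WmB: "W \<xi> * mB \<eta> \<le> KB L \<alpha> \<xi> \<eta> * uB (sub \<xi> \<eta>) * vB \<eta>" for \<eta>
      unfolding W_def mB_def c_def uB_def vB_def by (rule ptB[where A=Ab and \<psi>=\<psi>b and v=d, OF L x Ab0 hb p0(2) q0(3)])
    have WF: "W \<xi> * norm (F \<eta>) \<le> KA L \<alpha> \<xi> \<eta> * uq (sub \<xi> \<eta>) * vA \<eta>" for \<eta>
      unfolding W_def F_def c_def uq_def vA_def using ptA[where A=Aq and \<psi>=\<psi> and v=q, OF L x Aq0 hq p0(1) q0(1)]
      by (simp add: norm_mult)
    have WFb: "W \<xi> * norm (Fb \<eta>) \<le> KA L \<alpha> \<xi> \<eta> * ub (sub \<xi> \<eta>) * vb \<eta>" for \<eta>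
      unfolding W_def Fb_def c_def ub_def vb_def using ptA[where A=Ab and \<psi>=\<psi>b and v=qb, OF L x Ab0 hb p0(2) q0(2)]
      by (simp add: norm_mult)
    have div_le: "m \<le> K / W \<xi>" if "W \<xi> * m \<le> K" for m K
      using that Wp by (simp add: field_simps)
    have sm: "(\<lambda>\<eta>. m \<eta>) summable_on UNIV"
      if "\<And>\<eta>. W \<xi> * m \<eta> \<le> K \<eta>" "\<And>\<eta>. m \<eta> \<ge> 0" "K summable_on UNIV" for m K :: "int \<times> int \<Rightarrow> real"
    proof (rule summable_on_comparison_test[OF summable_on_cmult_left[OF that(3), of "1 / W \<xi>"]])
      fix \<eta> show "m \<eta> \<le> K \<eta> * (1 / W \<xi>)" using div_le[OF that(1)] by simp
    qed (use that in auto)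
    have smA: "mA summable_on UNIV" by (rule sm[OF WmA mA0 SA(1)])
    have smB: "mB summable_on UNIV" by (rule sm[OF WmB mB0 SB(1)])
    have sF: "F summable_on UNIV"
      by (rule abs_summable_summable, rule sm[OF WF _ SQ]) simp
    have sFb: "Fb summable_on UNIV"
      by (rule abs_summable_summable, rule sm[OF WFb _ SQb]) simp
    have diff: "infsum F UNIV - infsum Fb UNIV = infsum (\<lambda>\<eta>. F \<eta> - Fb \<eta>) UNIV"
    proof -
      have s2: "(\<lambda>\<eta>. - Fb \<eta>) summable_on UNIV" using sFb by (simp add: summable_on_uminus)
      have "infsum (\<lambda>\<eta>. F \<eta> + - Fb \<eta>) UNIV = infsum F UNIV + infsum (\<lambda>\<eta>. - Fb \<eta>) UNIV"
        by (rule infsum_add[OF sF s2])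
      then show ?thesis by (simp add: infsum_uminus)
    qed
    have nd: "norm (F \<eta> - Fb \<eta>) \<le> mA \<eta> + mB \<eta>" for \<eta>
    proof -
      have "F \<eta> - Fb \<eta> = complex_of_real (c \<eta>) * (\<psi>d (sub \<xi> \<eta>) * q \<eta> + \<psi>b (sub \<xi> \<eta>) * d \<eta>)"
        unfolding F_def Fb_def dq lin[symmetric] by (simp add: algebra_simps)
      then have "norm (F \<eta> - Fb \<eta>) = \<bar>c \<eta>\<bar> * norm (\<psi>d (sub \<xi> \<eta>) * q \<eta> + \<psi>b (sub \<xi> \<eta>) * d \<eta>)"
        by (simp add: norm_mult)
      also have "\<dots> \<le> \<bar>c \<eta>\<bar> * (cmod (\<psi>d (sub \<xi> \<eta>)) * cmod (q \<eta>) + cmod (\<psi>b (sub \<xi> \<eta>)) * cmod (d \<eta>))"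
        by (rule mult_left_mono) (auto intro: order_trans[OF norm_triangle_ineq] simp: norm_mult)
      also have "\<dots> = mA \<eta> + mB \<eta>" by (simp add: mA_def mB_def algebra_simps)
      finally show ?thesis .
    qed
    have sAB: "(\<lambda>\<eta>. mA \<eta> + mB \<eta>) summable_on UNIV" by (rule summable_on_add[OF smA smB])
    have sn: "(\<lambda>\<eta>. norm (F \<eta> - Fb \<eta>)) summable_on UNIV"
      by (rule summable_on_comparison_test[OF sAB]) (use nd in auto)
    have "cmod (jac L \<psi> q \<xi> - jac L \<psi>b qb \<xi>) = cmod (infsum (\<lambda>\<eta>. F \<eta> - Fb \<eta>) UNIV)"
      unfolding j1 j2 diff ..
    also have "\<dots> \<le> infsum (\<lambda>\<eta>. norm (F \<eta> - Fb \<eta>)) UNIV" by (rule norm_infsum_bound[OF sn])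
    also have "\<dots> \<le> infsum (\<lambda>\<eta>. mA \<eta> + mB \<eta>) UNIV" by (rule infsum_mono[OF sn sAB nd])
    also have "\<dots> = infsum mA UNIV + infsum mB UNIV" by (rule infsum_add[OF smA smB])
    finally have c1: "cmod (jac L \<psi> q \<xi> - jac L \<psi>b qb \<xi>) \<le> infsum mA UNIV + infsum mB UNIV" .
    have "W \<xi> * infsum mA UNIV = infsum (\<lambda>\<eta>. W \<xi> * mA \<eta>) UNIV" by (rule infsum_cmult_right'[symmetric])
    also have "\<dots> \<le> TA \<xi>" unfolding TA_def
      by (rule infsum_mono[OF summable_on_cmult_right[OF smA] SA(1) WmA])
    finally have c2: "W \<xi> * infsum mA UNIV \<le> TA \<xi>" .
    have "W \<xi> * infsum mB UNIV = infsum (\<lambda>\<eta>. W \<xi> * mB \<eta>) UNIV" by (rule infsum_cmult_right'[symmetric])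
    also have "\<dots> \<le> TB \<xi>" unfolding TB_def
      by (rule infsum_mono[OF summable_on_cmult_right[OF smB] SB(1) WmB])
    finally have c3: "W \<xi> * infsum mB UNIV \<le> TB \<xi>" .
    have "W \<xi> * cmod (jac L \<psi> q \<xi> - jac L \<psi>b qb \<xi>) \<le> W \<xi> * (infsum mA UNIV + infsum mB UNIV)"
      by (rule mult_left_mono[OF c1]) (use Wp in simp)
    also have "\<dots> \<le> TA \<xi> + TB \<xi>" using c2 c3 by (simp add: distrib_left)
    finally have "W \<xi> * cmod (jac L \<psi> q \<xi> - jac L \<psi>b qb \<xi>) \<le> TA \<xi> + TB \<xi>" .
    then show ?thesis by (rule sq_sum_le[rotated 3]) (use Wp TA0 TB0 in auto)
  qed
  have geq: "ksq L \<xi> powr (-1-\<alpha>) * (cmod (jac L \<psi> q \<xi> - jac L \<psi>b qb \<xi>))^2 = (W \<xi> * cmod (jac L \<psi> q \<xi> - jac L \<psi>b qb \<xi>))^2" for \<xi>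
    by (simp add: W_def power_mult_distrib)
  have sT: "(\<lambda>\<xi>. 2 * (TA \<xi>)^2 + 2 * (TB \<xi>)^2) summable_on UNIV"
    using summable_on_add[OF summable_on_cmult_right[OF SA(2), of 2] summable_on_cmult_right[OF SB(2), of 2]]
    unfolding TA_def TB_def .
  have sT': "(\<lambda>\<xi>. 2 * (TA \<xi>)^2 + 2 * (TB \<xi>)^2) summable_on (UNIV - {(0,0)})"
    by (rule summable_on_subset_banach[OF sT]) simp
  show sG: "(\<lambda>\<xi>. ksq L \<xi> powr (-1-\<alpha>) * (cmod (jac L \<psi> q \<xi> - jac L \<psi>b qb \<xi>))^2) summable_on (UNIV - {(0,0)})"
    by (rule summable_on_comparison_test[OF sT']) (use key in \<open>auto simp: geq\<close>)
  have "infsum (\<lambda>\<xi>. ksq L \<xi> powr (-1-\<alpha>) * (cmod (jac L \<psi> q \<xi> - jac L \<psi>b qb \<xi>))^2) (UNIV - {(0,0)})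
      \<le> infsum (\<lambda>\<xi>. 2 * (TA \<xi>)^2 + 2 * (TB \<xi>)^2) UNIV"
    by (rule infsum_mono_neutral[OF sG sT]) (use key TA0 TB0 in \<open>auto simp: geq\<close>)
  also have "\<dots> = 2 * infsum (\<lambda>\<xi>. (TA \<xi>)^2) UNIV + 2 * infsum (\<lambda>\<xi>. (TB \<xi>)^2) UNIV"
    using infsum_add[OF summable_on_cmult_right[OF SA(2), of 2] summable_on_cmult_right[OF SB(2), of 2]]
    unfolding TA_def TB_def by (simp add: infsum_cmult_right')
  also have "\<dots> \<le> 2 * (2 * MA L \<alpha> * infsum (\<lambda>\<zeta>. (uA \<zeta>)^2) UNIV * infsum (\<lambda>\<zeta>. (vA \<zeta>)^2) UNIV)
               + 2 * (2 * MB L \<alpha> * infsum (\<lambda>\<zeta>. (uB \<zeta>)^2) UNIV * infsum (\<lambda>\<zeta>. (vB \<zeta>)^2) UNIV)"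
    using SA(3) SB(3) unfolding TA_def TB_def by linarith
  finally show "infsum (\<lambda>\<xi>. ksq L \<xi> powr (-1-\<alpha>) * (cmod (jac L \<psi> q \<xi> - jac L \<psi>b qb \<xi>))^2) (UNIV - {(0,0)})
      \<le> 4 * MA L \<alpha> * infsum (\<lambda>\<zeta>. (sqrt (ksq L \<zeta> powr (-\<alpha>)) * Ad \<zeta>)^2) UNIV * infsum (\<lambda>\<eta>. (cmod (q \<eta>))^2) UNIV
       + 4 * MB L \<alpha> * infsum (\<lambda>\<zeta>. (sqrt (ksq L \<zeta>) * Ab \<zeta>)^2) UNIV * infsum (\<lambda>\<eta>. (sqrt (ksq L \<eta> powr (-\<alpha>)) * cmod (d \<eta>))^2) UNIV"
    unfolding uA_def vA_def uB_def vB_def by simp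
qed

lemma ext0:
  fixes f :: "int \<times> int \<Rightarrow> real"
  assumes "f (0,0) = 0"
  shows "f summable_on UNIV \<longleftrightarrow> f summable_on (UNIV - {(0,0)})"
    and "infsum f UNIV = infsum f (UNIV - {(0,0)})"
  by (rule summable_on_cong_neutral; use assms in auto)
     (rule infsum_cong_neutral; use assms in auto)

lemma L2_facts:
  assumes L: "L > 0" and h: "inH L 0 c"
  shows "c (0,0) = 0" and "csym c"
    and "(\<lambda>\<eta>. (cmod (c \<eta>))^2) summable_on UNIV"
    and "infsum (\<lambda>\<eta>. (cmod (c \<eta>))^2) UNIV = Hnorm2 L 0 c"
proof -
  show c0: "c (0,0) = 0" using h by (simp add: inH_def)
  show "csym c" using h by (simp add: inH_def csym_def)
  have eq: "ksq L \<xi> powr 0 * (cmod (c \<xi>))^2 = (cmod (c \<xi>))^2" if "\<xi> \<in> UNIV - {(0,0)}" for \<xi>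
    using ksq_pos[OF L, of \<xi>] that by simp
  have s: "(\<lambda>\<xi>. ksq L \<xi> powr 0 * (cmod (c \<xi>))^2) summable_on (UNIV - {(0,0)})" using h by (simp add: inH_def)
  have "(\<lambda>\<eta>. (cmod (c \<eta>))^2) summable_on (UNIV - {(0,0)}) \<longleftrightarrow> (\<lambda>\<xi>. ksq L \<xi> powr 0 * (cmod (c \<xi>))^2) summable_on (UNIV - {(0,0)})"
    by (rule summable_on_cong) (use eq in simp)
  then have s2: "(\<lambda>\<eta>. (cmod (c \<eta>))^2) summable_on (UNIV - {(0,0)})" using s by blast
  show "(\<lambda>\<eta>. (cmod (c \<eta>))^2) summable_on UNIV" using ext0(1)[of "\<lambda>\<eta>. (cmod (c \<eta>))^2"] c0 s2 by simp
  have "infsum (\<lambda>\<eta>. (cmod (c \<eta>))^2) UNIV = infsum (\<lambda>\<eta>. (cmod (c \<eta>))^2) (UNIV - {(0,0)})"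
    using ext0(2)[of "\<lambda>\<eta>. (cmod (c \<eta>))^2"] c0 by simp
  also have "\<dots> = Hnorm2 L 0 c" unfolding Hnorm2_def by (rule infsum_cong) (use eq in auto)
  finally show "infsum (\<lambda>\<eta>. (cmod (c \<eta>))^2) UNIV = Hnorm2 L 0 c" .
qed

lemma H1_facts:
  assumes L: "L > 0" and h: "inH L 1 c"
  shows "c (0,0) = 0" and "csym c"
    and "(\<lambda>\<eta>. (sqrt (ksq L \<eta>) * cmod (c \<eta>))^2) summable_on UNIV"
    and "infsum (\<lambda>\<eta>. (sqrt (ksq L \<eta>) * cmod (c \<eta>))^2) UNIV = Hnorm2 L 1 c"
    and "(\<lambda>\<eta>. (cmod (c \<eta>))^2) summable_on UNIV"
proof -
  show c0: "c (0,0) = 0" using h by (simp add: inH_def)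
  show "csym c" using h by (simp add: inH_def csym_def)
  have eq: "ksq L \<xi> powr 1 * (cmod (c \<xi>))^2 = (sqrt (ksq L \<xi>) * cmod (c \<xi>))^2" for \<xi>
    by (simp add: power_mult_distrib ksq_nonneg powr_one)
  have s: "(\<lambda>\<xi>. ksq L \<xi> powr 1 * (cmod (c \<xi>))^2) summable_on (UNIV - {(0,0)})" using h by (simp add: inH_def)
  have s2: "(\<lambda>\<eta>. (sqrt (ksq L \<eta>) * cmod (c \<eta>))^2) summable_on (UNIV - {(0,0)})"
    using s unfolding eq .
  show s3: "(\<lambda>\<eta>. (sqrt (ksq L \<eta>) * cmod (c \<eta>))^2) summable_on UNIV"
    using ext0(1)[of "\<lambda>\<eta>. (sqrt (ksq L \<eta>) * cmod (c \<eta>))^2"] c0 s2 by simp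
  have "infsum (\<lambda>\<eta>. (sqrt (ksq L \<eta>) * cmod (c \<eta>))^2) UNIV = infsum (\<lambda>\<eta>. (sqrt (ksq L \<eta>) * cmod (c \<eta>))^2) (UNIV - {(0,0)})"
    using ext0(2)[of "\<lambda>\<eta>. (sqrt (ksq L \<eta>) * cmod (c \<eta>))^2"] c0 by simp
  also have "\<dots> = Hnorm2 L 1 c" unfolding Hnorm2_def eq ..
  finally show "infsum (\<lambda>\<eta>. (sqrt (ksq L \<eta>) * cmod (c \<eta>))^2) UNIV = Hnorm2 L 1 c" .
  have cp: "cc L > 0" using cc_pos[OF L] .
  show "(\<lambda>\<eta>. (cmod (c \<eta>))^2) summable_on UNIV"
  proof (rule summable_on_comparison_test[OF summable_on_cmult_left[OF s3, of "1 / cc L"]])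
    fix \<eta> :: "int \<times> int"
    show "(cmod (c \<eta>))^2 \<le> (sqrt (ksq L \<eta>) * cmod (c \<eta>))^2 * (1 / cc L)"
    proof (cases "\<eta> = (0,0)")
      case True then show ?thesis using c0 by simp
    next
      case False
      have "cc L \<le> ksq L \<eta>" using ksq_ge[OF L False] .
      then have "cc L * (cmod (c \<eta>))^2 \<le> ksq L \<eta> * (cmod (c \<eta>))^2" by (rule mult_right_mono) simp
      then show ?thesis using cp by (simp add: power_mult_distrib ksq_nonneg field_simps)
    qed
  qed simp
qed

lemma neg_facts:
  assumes L: "L > 0" and a: "0 < \<alpha>" and c0: "c (0,0) = 0"
    and s: "(\<lambda>\<eta>. (cmod (c \<eta>))^2) summable_on UNIV"
  shows "(\<lambda>\<eta>. (sqrt (ksq L \<eta> powr (-\<alpha>)) * cmod (c \<eta>))^2) summable_on UNIV"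
    and "infsum (\<lambda>\<eta>. (sqrt (ksq L \<eta> powr (-\<alpha>)) * cmod (c \<eta>))^2) UNIV = Hnorm2 L (-\<alpha>) c"
    and "inH L (-\<alpha>) c \<longleftrightarrow> csym c"
proof -
  have cp: "cc L > 0" using cc_pos[OF L] .
  have eq: "(sqrt (ksq L \<eta> powr (-\<alpha>)) * cmod (c \<eta>))^2 = ksq L \<eta> powr (-\<alpha>) * (cmod (c \<eta>))^2" for \<eta>
    by (simp add: power_mult_distrib)
  show s1: "(\<lambda>\<eta>. (sqrt (ksq L \<eta> powr (-\<alpha>)) * cmod (c \<eta>))^2) summable_on UNIV"
  proof (rule summable_on_comparison_test[OF summable_on_cmult_left[OF s, of "cc L powr (-\<alpha>)"]])
    fix \<eta> :: "int \<times> int"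
    show "(sqrt (ksq L \<eta> powr (-\<alpha>)) * cmod (c \<eta>))^2 \<le> (cmod (c \<eta>))^2 * cc L powr (-\<alpha>)"
    proof (cases "\<eta> = (0,0)")
      case True then show ?thesis using c0 by simp
    next
      case False
      have "ksq L \<eta> powr (-\<alpha>) \<le> cc L powr (-\<alpha>)"
        by (rule pnegle) (use cp ksq_ge[OF L False] a in auto)
      from mult_right_mono[OF this, of "(cmod (c \<eta>))^2"]
      show ?thesis unfolding eq by (simp add: mult.commute)
    qed
  qed simp
  have "infsum (\<lambda>\<eta>. (sqrt (ksq L \<eta> powr (-\<alpha>)) * cmod (c \<eta>))^2) UNIV
      = infsum (\<lambda>\<eta>. (sqrt (ksq L \<eta> powr (-\<alpha>)) * cmod (c \<eta>))^2) (UNIV - {(0,0)})"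
    using ext0(2)[of "\<lambda>\<eta>. (sqrt (ksq L \<eta> powr (-\<alpha>)) * cmod (c \<eta>))^2"] c0 by simp
  also have "\<dots> = Hnorm2 L (-\<alpha>) c" unfolding Hnorm2_def eq ..
  finally show "infsum (\<lambda>\<eta>. (sqrt (ksq L \<eta> powr (-\<alpha>)) * cmod (c \<eta>))^2) UNIV = Hnorm2 L (-\<alpha>) c" .
  have "(\<lambda>\<eta>. ksq L \<eta> powr (-\<alpha>) * (cmod (c \<eta>))^2) summable_on (UNIV - {(0,0)})"
    using summable_on_subset_banach[OF s1, of "UNIV - {(0,0)}"] unfolding eq by simp
  then show "inH L (-\<alpha>) c \<longleftrightarrow> csym c" using c0 by (simp add: inH_def csym_def)
qed

lemma l2_diff:
  fixes a b :: sfield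
  assumes "(\<lambda>\<eta>. (cmod (a \<eta>))^2) summable_on UNIV" "(\<lambda>\<eta>. (cmod (b \<eta>))^2) summable_on UNIV"
  shows "(\<lambda>\<eta>. (cmod (a \<eta> - b \<eta>))^2) summable_on UNIV"
proof (rule summable_on_comparison_test[OF summable_on_add[OF summable_on_cmult_right[OF assms(1), of 2] summable_on_cmult_right[OF assms(2), of 2]]])
  fix \<eta>
  have "cmod (a \<eta> - b \<eta>) \<le> cmod (a \<eta>) + cmod (b \<eta>)" by (rule norm_triangle_ineq4)
  then show "(cmod (a \<eta> - b \<eta>))^2 \<le> 2 * (cmod (a \<eta>))^2 + 2 * (cmod (b \<eta>))^2"
    by (rule sq_sum_le[rotated 3]) auto
qed simp

lemma sum_two:
  fixes w x y :: "int \<times> int \<Rightarrow> real"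
  assumes "\<And>\<eta>. w \<eta> \<ge> 0" "\<And>\<eta>. x \<eta> \<ge> 0" "\<And>\<eta>. y \<eta> \<ge> 0"
    and sx: "(\<lambda>\<eta>. (w \<eta> * x \<eta>)^2) summable_on UNIV" and sy: "(\<lambda>\<eta>. (w \<eta> * y \<eta>)^2) summable_on UNIV"
  shows "(\<lambda>\<eta>. (w \<eta> * (x \<eta> + y \<eta>))^2) summable_on UNIV"
    and "infsum (\<lambda>\<eta>. (w \<eta> * (x \<eta> + y \<eta>))^2) UNIV \<le> 2 * (infsum (\<lambda>\<eta>. (w \<eta> * x \<eta>)^2) UNIV + infsum (\<lambda>\<eta>. (w \<eta> * y \<eta>)^2) UNIV)"
proof -
  have le: "(w \<eta> * (x \<eta> + y \<eta>))^2 \<le> 2 * (w \<eta> * x \<eta>)^2 + 2 * (w \<eta> * y \<eta>)^2" for \<eta>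
    by (rule sq_sum_le) (use assms in \<open>auto simp: distrib_left\<close>)
  have s: "(\<lambda>\<eta>. 2 * (w \<eta> * x \<eta>)^2 + 2 * (w \<eta> * y \<eta>)^2) summable_on UNIV"
    by (rule summable_on_add[OF summable_on_cmult_right[OF sx] summable_on_cmult_right[OF sy]])
  show s1: "(\<lambda>\<eta>. (w \<eta> * (x \<eta> + y \<eta>))^2) summable_on UNIV"
    by (rule summable_on_comparison_test[OF s le]) simp
  have "infsum (\<lambda>\<eta>. (w \<eta> * (x \<eta> + y \<eta>))^2) UNIV \<le> infsum (\<lambda>\<eta>. 2 * (w \<eta> * x \<eta>)^2 + 2 * (w \<eta> * y \<eta>)^2) UNIV"
    by (rule infsum_mono[OF s1 s le])
  also have "\<dots> = 2 * (infsum (\<lambda>\<eta>. (w \<eta> * x \<eta>)^2) UNIV + infsum (\<lambda>\<eta>. (w \<eta> * y \<eta>)^2) UNIV)"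
    using infsum_add[OF summable_on_cmult_right[OF sx, of 2] summable_on_cmult_right[OF sy, of 2]]
    by (simp add: infsum_cmult_right' distrib_left)
  finally show "infsum (\<lambda>\<eta>. (w \<eta> * (x \<eta> + y \<eta>))^2) UNIV \<le> 2 * (infsum (\<lambda>\<eta>. (w \<eta> * x \<eta>)^2) UNIV + infsum (\<lambda>\<eta>. (w \<eta> * y \<eta>)^2) UNIV)" .
qed

lemma MA_nonneg: "L > 0 \<Longrightarrow> MA L \<alpha> \<ge> 0"
  using cc_pos[of L] by (simp add: MA_def)
lemma MB_nonneg: "L > 0 \<Longrightarrow> MB L \<alpha> \<ge> 0"
  using cc_pos[of L] by (simp add: MB_def)

lemma final_arith:
  fixes N1 N2 MA MB UAd UAb V1 V2 Hd1 Hd2 Qb :: real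
  assumes "0 \<le> MA" "0 \<le> MB" "0 \<le> V1" "0 \<le> V2" "0 \<le> Hd1" "0 \<le> Hd2" "0 \<le> Qb" "0 \<le> UAd" "0 \<le> UAb"
    and "N1 \<le> 4 * MA * UAd * V1 + 4 * MB * UAb * Hd1"
    and "N2 \<le> 4 * MA * UAd * V2 + 4 * MB * UAb * Hd2"
    and "UAd \<le> 2 * (Hd1 + Hd2)" and "UAb \<le> 2 * Qb"
  shows "N1 + N2 \<le> 8 * (MA + MB) * (Hd1 + Hd2) * ((V1 + V2) + Qb)"
proof -
  have "N1 + N2 \<le> 4 * MA * UAd * (V1 + V2) + 4 * MB * UAb * (Hd1 + Hd2)"
    using assms by (simp add: algebra_simps)
  also have "\<dots> \<le> 4 * MA * (2 * (Hd1 + Hd2)) * (V1 + V2) + 4 * MB * (2 * Qb) * (Hd1 + Hd2)"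
    using assms by (intro add_mono mult_right_mono mult_left_mono) auto
  also have "\<dots> \<le> 8 * (MA + MB) * (Hd1 + Hd2) * ((V1 + V2) + Qb)"
  proof -
    have "0 \<le> 8 * MA * (Hd1 + Hd2) * Qb + 8 * MB * (Hd1 + Hd2) * (V1 + V2)"
      using assms by (intro add_nonneg_nonneg mult_nonneg_nonneg) auto
    then show ?thesis by (simp add: algebra_simps)
  qed
  finally show ?thesis .
qed

theorem mainTheorem10:
  fixes L S1 S2 \<alpha> :: real
  assumes "L > 0" and "S1 > 0" and "S2 > 0" and "0 < \<alpha>" and "\<alpha> < 1"
  shows "\<exists>C. \<forall>q qb. inHv L 0 q \<longrightarrow> inHv L 1 qb \<longrightarrow>
           inHv L (-1-\<alpha>) (vdiff (Rop L S1 S2 q) (Rop L S1 S2 qb)) \<and>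
           Hvnorm L (-1-\<alpha>) (vdiff (Rop L S1 S2 q) (Rop L S1 S2 qb))
             \<le> C * Hvnorm L (-\<alpha>) (vdiff q qb) * (Hvnorm L 0 q + Hvnorm L 1 qb)"
proof -
  note L = assms(1) and S = assms(2,3) and a = assms(4,5)
  define C where "C = sqrt (8 * (MA L \<alpha> + MB L \<alpha>))"
  show ?thesis
  proof (rule exI[of _ C], intro allI impI)
    fix q qb :: vfield
    assume hq: "inHv L 0 q" and hqb: "inHv L 1 qb"
    have iq1: "inH L 0 (fst q)" and iq2: "inH L 0 (snd q)" using hq by (auto simp: inHv_def)
    have ib1: "inH L 1 (fst qb)" and ib2: "inH L 1 (snd qb)" using hqb by (auto simp: inHv_def)
    note Q1 = L2_facts[OF L iq1] and Q2 = L2_facts[OF L iq2]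
    note B1 = H1_facts[OF L ib1] and B2 = H1_facts[OF L ib2]
    define d where "d = vdiff q qb"
    have d1: "fst d \<eta> = fst q \<eta> - fst qb \<eta>" for \<eta> by (simp add: d_def vdiff_def)
    have d2: "snd d \<eta> = snd q \<eta> - snd qb \<eta>" for \<eta> by (simp add: d_def vdiff_def)
    have d10: "fst d (0,0) = 0" using Q1(1) B1(1) d1 by simp
    have d20: "snd d (0,0) = 0" using Q2(1) B2(1) d2 by simp
    have sd1: "(\<lambda>\<eta>. (cmod (fst d \<eta>))^2) summable_on UNIV" unfolding d1 by (rule l2_diff[OF Q1(3) B1(5)])
    have sd2: "(\<lambda>\<eta>. (cmod (snd d \<eta>))^2) summable_on UNIV" unfolding d2 by (rule l2_diff[OF Q2(3) B2(5)])
    note Nd1 = neg_facts[OF L a(1) d10 sd1] and Nd2 = neg_facts[OF L a(1) d20 sd2]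
    note Nq1 = neg_facts[OF L a(1) Q1(1) Q1(3)] and Nq2 = neg_facts[OF L a(1) Q2(1) Q2(3)]
    note Nb1 = neg_facts[OF L a(1) B1(1) B1(5)] and Nb2 = neg_facts[OF L a(1) B2(1) B2(5)]
    define w where "w \<eta> = sqrt (ksq L \<eta> powr (-\<alpha>))" for \<eta>
    have w0: "w \<eta> \<ge> 0" for \<eta> by (simp add: w_def)
    note TQ = sum_two[of w "\<lambda>\<eta>. cmod (fst q \<eta>)" "\<lambda>\<eta>. cmod (snd q \<eta>)", OF w0 _ _ Nq1(1)[folded w_def] Nq2(1)[folded w_def]]
    note TB' = sum_two[of w "\<lambda>\<eta>. cmod (fst qb \<eta>)" "\<lambda>\<eta>. cmod (snd qb \<eta>)", OF w0 _ _ Nb1(1)[folded w_def] Nb2(1)[folded w_def]]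
    note TD = sum_two[of w "\<lambda>\<eta>. cmod (fst d \<eta>)" "\<lambda>\<eta>. cmod (snd d \<eta>)", OF w0 _ _ Nd1(1)[folded w_def] Nd2(1)[folded w_def]]
    note TB = sum_two[of "\<lambda>\<eta>. sqrt (ksq L \<eta>)" "\<lambda>\<eta>. cmod (fst qb \<eta>)" "\<lambda>\<eta>. cmod (snd qb \<eta>)", OF _ _ _ B1(3) B2(3)]
    define \<psi> where "\<psi> = invop L S1 S2 q"
    define \<psi>b where "\<psi>b = invop L S1 S2 qb"
    define \<psi>d where "\<psi>d = invop L S1 S2 d"
    define Aq where "Aq \<zeta> = cmod (fst q \<zeta>) + cmod (snd q \<zeta>)" for \<zeta>
    define Ab where "Ab \<zeta> = cmod (fst qb \<zeta>) + cmod (snd qb \<zeta>)" for \<zeta>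
    define Ad where "Ad \<zeta> = cmod (fst d \<zeta>) + cmod (snd d \<zeta>)" for \<zeta>
    have Aq0: "Aq \<zeta> \<ge> 0" and Ab0: "Ab \<zeta> \<ge> 0" and Ad0: "Ad \<zeta> \<ge> 0" for \<zeta> by (auto simp: Aq_def Ab_def Ad_def)
    have hbq: "cmod (fst \<psi> \<zeta>) \<le> Aq \<zeta> / ksq L \<zeta>" "cmod (snd \<psi> \<zeta>) \<le> Aq \<zeta> / ksq L \<zeta>" if "\<zeta> \<noteq> (0,0)" for \<zeta>
      unfolding \<psi>_def Aq_def using invop_bound[OF L S that] by auto
    have hbb: "cmod (fst \<psi>b \<zeta>) \<le> Ab \<zeta> / ksq L \<zeta>" "cmod (snd \<psi>b \<zeta>) \<le> Ab \<zeta> / ksq L \<zeta>" if "\<zeta> \<noteq> (0,0)" for \<zeta>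
      unfolding \<psi>b_def Ab_def using invop_bound[OF L S that] by auto
    have hbd: "cmod (fst \<psi>d \<zeta>) \<le> Ad \<zeta> / ksq L \<zeta>" "cmod (snd \<psi>d \<zeta>) \<le> Ad \<zeta> / ksq L \<zeta>" if "\<zeta> \<noteq> (0,0)" for \<zeta>
      unfolding \<psi>d_def Ad_def using invop_bound[OF L S that] by auto
    have lin1: "fst \<psi> \<zeta> - fst \<psi>b \<zeta> = fst \<psi>d \<zeta>" for \<zeta> unfolding \<psi>_def \<psi>b_def \<psi>d_def d_def by (rule invop_lin)
    have lin2: "snd \<psi> \<zeta> - snd \<psi>b \<zeta> = snd \<psi>d \<zeta>" for \<zeta> unfolding \<psi>_def \<psi>b_def \<psi>d_def d_def by (rule invop_lin)
    have sAq: "(\<lambda>\<zeta>. (sqrt (ksq L \<zeta> powr (-\<alpha>)) * Aq \<zeta>)^2) summable_on UNIV"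
      using TQ(1) by (simp add: w_def Aq_def)
    have sAb': "(\<lambda>\<zeta>. (sqrt (ksq L \<zeta> powr (-\<alpha>)) * Ab \<zeta>)^2) summable_on UNIV"
      using TB'(1) by (simp add: w_def Ab_def)
    have sAd: "(\<lambda>\<zeta>. (sqrt (ksq L \<zeta> powr (-\<alpha>)) * Ad \<zeta>)^2) summable_on UNIV"
      using TD(1) by (simp add: w_def Ad_def)
    have sAb: "(\<lambda>\<zeta>. (sqrt (ksq L \<zeta>) * Ab \<zeta>)^2) summable_on UNIV"
      using TB(1) by (simp add: Ab_def ksq_nonneg)
    define UAd where "UAd = infsum (\<lambda>\<zeta>. (sqrt (ksq L \<zeta> powr (-\<alpha>)) * Ad \<zeta>)^2) UNIV"
    define UAb where "UAb = infsum (\<lambda>\<zeta>. (sqrt (ksq L \<zeta>) * Ab \<zeta>)^2) UNIV"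
    have UAd_le: "UAd \<le> 2 * (Hnorm2 L (-\<alpha>) (fst d) + Hnorm2 L (-\<alpha>) (snd d))"
      using TD(2) Nd1(2) Nd2(2) by (simp add: UAd_def w_def Ad_def)
    have UAb_le: "UAb \<le> 2 * (Hnorm2 L 1 (fst qb) + Hnorm2 L 1 (snd qb))"
      using TB(2) B1(4) B2(4) by (simp add: UAb_def Ab_def ksq_nonneg)
    have p0: "fst \<psi> (0,0) = 0" "fst \<psi>b (0,0) = 0" "fst \<psi>d (0,0) = 0"
             "snd \<psi> (0,0) = 0" "snd \<psi>b (0,0) = 0" "snd \<psi>d (0,0) = 0"
      by (simp_all add: \<psi>_def \<psi>b_def \<psi>d_def invop_zero)
    note CE1 = comp_est[OF L a, of Aq Ab Ad "fst \<psi>" "fst \<psi>b" "fst \<psi>d" "fst q" "fst qb" "fst d",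
        OF Aq0 Ab0 Ad0 hbq(1) hbb(1) hbd(1) p0(1) p0(2) p0(3) Q1(1) B1(1) d10 lin1 d1 sAq sAb' sAd sAb Q1(3) B1(5) Nd1(1)]
    note CE2 = comp_est[OF L a, of Aq Ab Ad "snd \<psi>" "snd \<psi>b" "snd \<psi>d" "snd q" "snd qb" "snd d",
        OF Aq0 Ab0 Ad0 hbq(2) hbb(2) hbd(2) p0(4) p0(5) p0(6) Q2(1) B2(1) d20 lin2 d2 sAq sAb' sAd sAb Q2(3) B2(5) Nd2(1)]
    define DD where "DD = vdiff (Rop L S1 S2 q) (Rop L S1 S2 qb)"
    have DD1: "fst DD \<xi> = - (jac L (fst \<psi>) (fst q) \<xi> - jac L (fst \<psi>b) (fst qb) \<xi>)" for \<xi>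
      by (simp add: DD_def vdiff_def Rop_def Let_def \<psi>_def \<psi>b_def)
    have DD2: "snd DD \<xi> = - (jac L (snd \<psi>) (snd q) \<xi> - jac L (snd \<psi>b) (snd qb) \<xi>)" for \<xi>
      by (simp add: DD_def vdiff_def Rop_def Let_def \<psi>_def \<psi>b_def)
    have cs: "csym (fst \<psi>)" "csym (snd \<psi>)" unfolding \<psi>_def by (rule invop_csym[OF Q1(2) Q2(2)])+
    have csb: "csym (fst \<psi>b)" "csym (snd \<psi>b)" unfolding \<psi>b_def by (rule invop_csym[OF B1(2) B2(2)])+
    have eqN1: "(\<lambda>\<xi>. ksq L \<xi> powr (-1-\<alpha>) * (cmod (fst DD \<xi>))^2)
        = (\<lambda>\<xi>. ksq L \<xi> powr (-1-\<alpha>) * (cmod (jac L (fst \<psi>) (fst q) \<xi> - jac L (fst \<psi>b) (fst qb) \<xi>))^2)"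
      unfolding DD1 by (simp only: norm_minus_cancel)
    have eqN2: "(\<lambda>\<xi>. ksq L \<xi> powr (-1-\<alpha>) * (cmod (snd DD \<xi>))^2)
        = (\<lambda>\<xi>. ksq L \<xi> powr (-1-\<alpha>) * (cmod (jac L (snd \<psi>) (snd q) \<xi> - jac L (snd \<psi>b) (snd qb) \<xi>))^2)"
      unfolding DD2 by (simp only: norm_minus_cancel)
    have inH1: "inH L (-1-\<alpha>) (fst DD)"
      unfolding inH_def
    proof (intro conjI allI)
      show "fst DD (0,0) = 0" unfolding DD1 by (simp add: jac_zero)
      fix a b :: int
      have "fst DD (neg (a,b)) = cnj (fst DD (a,b))"
        unfolding DD1 using jac_cnj[OF cs(1) Q1(2), of L "(a,b)"] jac_cnj[OF csb(1) B1(2), of L "(a,b)"] by simp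
      then show "fst DD (-a, -b) = cnj (fst DD (a, b))" by (simp add: neg_def)
    next
      show "(\<lambda>\<xi>. ksq L \<xi> powr (-1-\<alpha>) * (cmod (fst DD \<xi>))^2) summable_on (UNIV - {(0,0)})"
        unfolding eqN1 by (rule CE1(1))
    qed
    have inH2: "inH L (-1-\<alpha>) (snd DD)"
      unfolding inH_def
    proof (intro conjI allI)
      show "snd DD (0,0) = 0" unfolding DD2 by (simp add: jac_zero)
      fix a b :: int
      have "snd DD (neg (a,b)) = cnj (snd DD (a,b))"
        unfolding DD2 using jac_cnj[OF cs(2) Q2(2), of L "(a,b)"] jac_cnj[OF csb(2) B2(2), of L "(a,b)"] by simp
      then show "snd DD (-a, -b) = cnj (snd DD (a, b))" by (simp add: neg_def)
    next
      show "(\<lambda>\<xi>. ksq L \<xi> powr (-1-\<alpha>) * (cmod (snd DD \<xi>))^2) summable_on (UNIV - {(0,0)})"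
        unfolding eqN2 by (rule CE2(1))
    qed
    have inHvDD: "inHv L (-1-\<alpha>) (vdiff (Rop L S1 S2 q) (Rop L S1 S2 qb))"
      using inH1 inH2 unfolding DD_def inHv_def by simp
    have H0: "Hnorm2 L s c \<ge> 0" for s c unfolding Hnorm2_def by (rule infsum_nonneg) simp
    define N1 where "N1 = Hnorm2 L (-1-\<alpha>) (fst DD)"
    define N2 where "N2 = Hnorm2 L (-1-\<alpha>) (snd DD)"
    define V1 where "V1 = Hnorm2 L 0 (fst q)"
    define V2 where "V2 = Hnorm2 L 0 (snd q)"
    define Hd1 where "Hd1 = Hnorm2 L (-\<alpha>) (fst d)"
    define Hd2 where "Hd2 = Hnorm2 L (-\<alpha>) (snd d)"
    define Qb where "Qb = Hnorm2 L 1 (fst qb) + Hnorm2 L 1 (snd qb)"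
    have N1le: "N1 \<le> 4 * MA L \<alpha> * UAd * V1 + 4 * MB L \<alpha> * UAb * Hd1"
      using CE1(2) unfolding N1_def Hnorm2_def eqN1 UAd_def[symmetric] UAb_def[symmetric] Q1(4) Nd1(2)
        V1_def Hd1_def .
    have N2le: "N2 \<le> 4 * MA L \<alpha> * UAd * V2 + 4 * MB L \<alpha> * UAb * Hd2"
      using CE2(2) unfolding N2_def Hnorm2_def eqN2 UAd_def[symmetric] UAb_def[symmetric] Q2(4) Nd2(2)
        V2_def Hd2_def .
    have UAd0: "UAd \<ge> 0" unfolding UAd_def by (rule infsum_nonneg) simp
    have UAb0: "UAb \<ge> 0" unfolding UAb_def by (rule infsum_nonneg) simp
    have V10: "V1 \<ge> 0" unfolding V1_def by (rule H0)
    have V20: "V2 \<ge> 0" unfolding V2_def by (rule H0)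
    have Hd10: "Hd1 \<ge> 0" unfolding Hd1_def by (rule H0)
    have Hd20: "Hd2 \<ge> 0" unfolding Hd2_def by (rule H0)
    have Qb0: "Qb \<ge> 0" unfolding Qb_def using H0 by (simp add: add_nonneg_nonneg)
    have UAd_le': "UAd \<le> 2 * (Hd1 + Hd2)" using UAd_le by (simp add: Hd1_def Hd2_def)
    have UAb_le': "UAb \<le> 2 * Qb" using UAb_le by (simp add: Qb_def)
    have NN: "N1 + N2 \<le> 8 * (MA L \<alpha> + MB L \<alpha>) * (Hd1 + Hd2) * ((V1 + V2) + Qb)"
      by (rule final_arith[OF MA_nonneg[OF L] MB_nonneg[OF L] V10 V20 Hd10 Hd20 Qb0 UAd0 UAb0 N1le N2le UAd_le' UAb_le'])
    have e1: "Hvnorm L (-1-\<alpha>) (vdiff (Rop L S1 S2 q) (Rop L S1 S2 qb)) = sqrt (N1 + N2)"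
      by (simp add: Hvnorm_def N1_def N2_def DD_def)
    have e2: "Hvnorm L (-\<alpha>) (vdiff q qb) = sqrt (Hd1 + Hd2)"
      by (simp add: Hvnorm_def Hd1_def Hd2_def d_def)
    have e3: "Hvnorm L 0 q = sqrt (V1 + V2)" by (simp add: Hvnorm_def V1_def V2_def)
    have e4: "Hvnorm L 1 qb = sqrt Qb" by (simp add: Hvnorm_def Qb_def)
    have pH: "Hd1 + Hd2 \<ge> 0" "V1 + V2 \<ge> 0" "Qb \<ge> 0"
      using H0 by (auto simp: Hd1_def Hd2_def V1_def V2_def Qb_def intro: add_nonneg_nonneg)
    have "sqrt (N1 + N2) \<le> sqrt (8 * (MA L \<alpha> + MB L \<alpha>) * (Hd1 + Hd2) * ((V1 + V2) + Qb))"
      by (rule real_sqrt_le_mono[OF NN])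
    also have "\<dots> = C * sqrt (Hd1 + Hd2) * sqrt ((V1 + V2) + Qb)"
      by (simp add: C_def real_sqrt_mult)
    also have "\<dots> \<le> C * sqrt (Hd1 + Hd2) * (sqrt (V1 + V2) + sqrt Qb)"
      by (rule mult_left_mono[OF sqrt_add_le_add_sqrt]) (use pH MA_nonneg[OF L, of \<alpha>] MB_nonneg[OF L, of \<alpha>] in \<open>auto simp: C_def intro!: mult_nonneg_nonneg\<close>)
    finally have nb: "Hvnorm L (-1-\<alpha>) (vdiff (Rop L S1 S2 q) (Rop L S1 S2 qb))
             \<le> C * Hvnorm L (-\<alpha>) (vdiff q qb) * (Hvnorm L 0 q + Hvnorm L 1 qb)"
      unfolding e1 e2 e3 e4 .
    show "inHv L (-1-\<alpha>) (vdiff (Rop L S1 S2 q) (Rop L S1 S2 qb)) \<and>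
           Hvnorm L (-1-\<alpha>) (vdiff (Rop L S1 S2 q) (Rop L S1 S2 qb))
             \<le> C * Hvnorm L (-\<alpha>) (vdiff q qb) * (Hvnorm L 0 q + Hvnorm L 1 qb)"
      using inHvDD nb by blast
  qed
qed

end
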